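(* Let $T=\operatorname{Th}(\mathbb{Z};+,<,0)$ (Presburger arithmetic), $\mathcal{U}$ a monster model of $T$ containing $\mathbb{Z}$ as an elementary submodel, and $\mu\in\mathfrak{M}_x(\mathcal{U})$, $\nu\in\mathfrak{M}_y(\mathcal{U})$ (one variable each). (1) If $\mu(x>b)=\nu(y>b)=1$ for every $b\in\mathcal{U}$, then $\mu\geq_{\mathbb{E},\mathbb{Z}}\nu$. (2) If $\mu(x<b)=\nu(y<b)=1$ for every $b\in\mathcal{U}$, then $\mu\geq_{\mathbb{E},\mathbb{Z}}\nu$.
   Context: For $C\subseteq\mathcal{U}$, $\mathcal{L}_x(C)$ is the Boolean algebra of formulas in $x$ with parameters from $C$ modulo $T$, embedded in $\mathcal{L}_{xy}(C)$ via $\varphi(x)\mapsto\varphi(x)\wedge y=y$; $\mathfrak{M}_x(C)$ is the set of finitely additive probability measures (Keisler measures) on $\mathcal{L}_x(C)$. For $\omega\in\mathfrak{M}_{xy}(C)$, $\pi_x(\omega)(\varphi(x))=\omega(\varphi(x)\wedge y=y)$ (similarly $\pi_y$); $\omega|_D$ is restriction. $\mu\geq_{\mathbb{E},\mathbb{Z}}\nu$ means there is $\lambda\in\mathfrak{M}_{xy}(\mathbb{Z})$ with $\pi_x(\lambda)=\mu|_{\mathbb{Z}}$ such that every $\omega\in\mathfrak{M}_{xy}(\mathcal{U})$ with $\omega|_{\mathbb{Z}}=\lambda$ and $\pi_x(\omega)=\mu$ satisfies $\pi_y(\omega)=\nu$. *)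

theory Defs
  imports Complex_Main
begin

datatype ptm = PVar nat | PZero | PPlus ptm ptm

datatype pfm = PEq ptm ptm | PLt ptm ptm | PNeg pfm | PConj pfm pfm | PEx nat pfm

text \<open>A structure for the language is given by an interpretation (pl, lt, z)
  of +, < and 0 on a universe type 'u; variable assignments are nat \<Rightarrow> 'u.\<close>

fun evalt :: "('u \<Rightarrow> 'u \<Rightarrow> 'u) \<Rightarrow> 'u \<Rightarrow> (nat \<Rightarrow> 'u) \<Rightarrow> ptm \<Rightarrow> 'u" where
  "evalt pl z v (PVar n) = v n"
| "evalt pl z v PZero = z"
| "evalt pl z v (PPlus s t) = pl (evalt pl z v s) (evalt pl z v t)"

fun sat :: "('u \<Rightarrow> 'u \<Rightarrow> 'u) \<Rightarrow> ('u \<Rightarrow> 'u \<Rightarrow> bool) \<Rightarrow> 'u \<Rightarrow> pfm \<Rightarrow> (nat \<Rightarrow> 'u) \<Rightarrow> bool" where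
  "sat pl lt z (PEq s t) v = (evalt pl z v s = evalt pl z v t)"
| "sat pl lt z (PLt s t) v = lt (evalt pl z v s) (evalt pl z v t)"
| "sat pl lt z (PNeg f) v = (\<not> sat pl lt z f v)"
| "sat pl lt z (PConj f g) v = (sat pl lt z f v \<and> sat pl lt z g v)"
| "sat pl lt z (PEx n f) v = (\<exists>a. sat pl lt z f (v(n := a)))"

definition elem_emb :: "('u \<Rightarrow> 'u \<Rightarrow> 'u) \<Rightarrow> ('u \<Rightarrow> 'u \<Rightarrow> bool) \<Rightarrow> 'u \<Rightarrow> (int \<Rightarrow> 'u) \<Rightarrow> bool" where
  "elem_emb pl lt z e \<longleftrightarrow> inj e \<and>
     (\<forall>\<phi> (v :: nat \<Rightarrow> int). sat (+) (<) 0 \<phi> v \<longleftrightarrow> sat pl lt z \<phi> (e \<circ> v))"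

text \<open>Saturation (monster model): every finitely satisfiable set of formulas in the
  variable x (= variable 0) with parameters from a set A of cardinality strictly less
  than that of the universe (no injection of the universe into A) is realized.\<close>

definition saturated :: "('u \<Rightarrow> 'u \<Rightarrow> 'u) \<Rightarrow> ('u \<Rightarrow> 'u \<Rightarrow> bool) \<Rightarrow> 'u \<Rightarrow> bool" where
  "saturated pl lt z \<longleftrightarrow>
     (\<forall>(A :: 'u set) (\<Phi> :: (pfm \<times> (nat \<Rightarrow> 'u)) set).
        \<not> (\<exists>f :: 'u \<Rightarrow> 'u. inj f \<and> range f \<subseteq> A) \<longrightarrow>
        (\<forall>(\<phi>, v) \<in> \<Phi>. \<forall>n. n \<noteq> 0 \<longrightarrow> v n \<in> A) \<longrightarrow>
        (\<forall>F \<subseteq> \<Phi>. finite F \<longrightarrow> (\<exists>a. \<forall>(\<phi>, v) \<in> F. sat pl lt z \<phi> (v(0 := a)))) \<longrightarrow>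
        (\<exists>a. \<forall>(\<phi>, v) \<in> \<Phi>. sat pl lt z \<phi> (v(0 := a))))"

section \<open>Definable sets: L_x(C) and L_xy(C) as Boolean algebras of C-definable sets\<close>

text \<open>x is variable 0, y is variable 1; all other variables are parameters from C.\<close>

definition def1 :: "('u \<Rightarrow> 'u \<Rightarrow> 'u) \<Rightarrow> ('u \<Rightarrow> 'u \<Rightarrow> bool) \<Rightarrow> 'u \<Rightarrow> 'u set \<Rightarrow> 'u set set" where
  "def1 pl lt z C = {{a. sat pl lt z \<phi> (v(0 := a))} | \<phi> v. \<forall>n. n \<noteq> 0 \<longrightarrow> v n \<in> C}"

definition def2 :: "('u \<Rightarrow> 'u \<Rightarrow> 'u) \<Rightarrow> ('u \<Rightarrow> 'u \<Rightarrow> bool) \<Rightarrow> 'u \<Rightarrow> 'u set \<Rightarrow> ('u \<times> 'u) set set" where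
  "def2 pl lt z C = {{(a, b). sat pl lt z \<phi> (v(0 := a, 1 := b))} | \<phi> v.
                       \<forall>n. n \<noteq> 0 \<and> n \<noteq> 1 \<longrightarrow> v n \<in> C}"

text \<open>Keisler measure on a Boolean algebra B of sets (values outside B are irrelevant).\<close>

definition keisler :: "'a set set \<Rightarrow> ('a set \<Rightarrow> real) \<Rightarrow> bool" where
  "keisler B m \<longleftrightarrow> (\<forall>D \<in> B. 0 \<le> m D) \<and> m UNIV = 1 \<and>
     (\<forall>D \<in> B. \<forall>E \<in> B. D \<inter> E = {} \<longrightarrow> m (D \<union> E) = m D + m E)"

text \<open>mu \<ge>_{E,Z} nu, where Zs is the (image of the) elementary submodel Z.
  pi_x(omega)(D) = omega(D \<times> UNIV), pi_y(omega)(D) = omega(UNIV \<times> D).\<close>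

definition geEZ :: "('u \<Rightarrow> 'u \<Rightarrow> 'u) \<Rightarrow> ('u \<Rightarrow> 'u \<Rightarrow> bool) \<Rightarrow> 'u \<Rightarrow> 'u set \<Rightarrow>
                    ('u set \<Rightarrow> real) \<Rightarrow> ('u set \<Rightarrow> real) \<Rightarrow> bool" where
  "geEZ pl lt z Zs \<mu> \<nu> \<longleftrightarrow>
     (\<exists>lam. keisler (def2 pl lt z Zs) lam \<and>
        (\<forall>D \<in> def1 pl lt z Zs. lam (D \<times> UNIV) = \<mu> D) \<and>
        (\<forall>\<omega>. keisler (def2 pl lt z UNIV) \<omega> \<longrightarrow>
              (\<forall>E \<in> def2 pl lt z Zs. \<omega> E = lam E) \<longrightarrow>
              (\<forall>D \<in> def1 pl lt z UNIV. \<omega> (D \<times> UNIV) = \<mu> D) \<longrightarrow>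
              (\<forall>D \<in> def1 pl lt z UNIV. \<omega> (UNIV \<times> D) = \<nu> D)))"

end

theory Submission
  imports Defs "HOL-Decision_Procs.Cooper"
begin

definition PAll :: "nat \<Rightarrow> pfm \<Rightarrow> pfm" where "PAll n f = PNeg (PEx n (PNeg f))"
definition PDisj :: "pfm \<Rightarrow> pfm \<Rightarrow> pfm" where "PDisj f g = PNeg (PConj (PNeg f) (PNeg g))"
definition PImp :: "pfm \<Rightarrow> pfm \<Rightarrow> pfm" where "PImp f g = PNeg (PConj f (PNeg g))"
definition PTrue :: pfm where "PTrue = PEq PZero PZero"

fun BigConj :: "pfm list \<Rightarrow> pfm" where
  "BigConj [] = PTrue"
| "BigConj (f # fs) = PConj f (BigConj fs)"

definition BigDisj :: "pfm list \<Rightarrow> pfm" where "BigDisj fs = PNeg (BigConj (map PNeg fs))"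

fun Alls :: "nat list \<Rightarrow> pfm \<Rightarrow> pfm" where
  "Alls [] f = f"
| "Alls (n # ns) f = PAll n (Alls ns f)"

fun ntimes :: "nat \<Rightarrow> ptm \<Rightarrow> ptm" where
  "ntimes 0 t = PZero"
| "ntimes (Suc n) t = PPlus t (ntimes n t)"

fun ntU :: "('u \<Rightarrow> 'u \<Rightarrow> 'u) \<Rightarrow> 'u \<Rightarrow> nat \<Rightarrow> 'u \<Rightarrow> 'u" where
  "ntU pl z 0 x = z"
| "ntU pl z (Suc n) x = pl x (ntU pl z n x)"

definition ltd :: "('u \<Rightarrow> 'u \<Rightarrow> bool) \<Rightarrow> bool \<Rightarrow> 'u \<Rightarrow> 'u \<Rightarrow> bool" where
  "ltd lt d a b = (if d then lt a b else lt b a)"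

definition PLtd :: "bool \<Rightarrow> nat \<Rightarrow> nat \<Rightarrow> pfm" where
  "PLtd d i j = (if d then PLt (PVar i) (PVar j) else PLt (PVar j) (PVar i))"

definition Dform :: "nat \<Rightarrow> nat \<Rightarrow> nat \<Rightarrow> nat \<Rightarrow> pfm" where
  "Dform N y t c = PEx t (PEq (PVar y) (PPlus (ntimes N (PVar t)) (PVar c)))"

lemma sat_PAll[simp]: "sat pl lt z (PAll n f) v = (\<forall>a. sat pl lt z f (v(n := a)))"
  by (simp add: PAll_def)
lemma sat_PDisj[simp]: "sat pl lt z (PDisj f g) v = (sat pl lt z f v \<or> sat pl lt z g v)"
  by (simp add: PDisj_def)
lemma sat_PImp[simp]: "sat pl lt z (PImp f g) v = (sat pl lt z f v \<longrightarrow> sat pl lt z g v)"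
  by (simp add: PImp_def)
lemma sat_PTrue[simp]: "sat pl lt z PTrue v"
  by (simp add: PTrue_def)
lemma sat_BigConj[simp]: "sat pl lt z (BigConj fs) v = (\<forall>f\<in>set fs. sat pl lt z f v)"
  by (induct fs) auto
lemma sat_BigDisj[simp]: "sat pl lt z (BigDisj fs) v = (\<exists>f\<in>set fs. sat pl lt z f v)"
  by (simp add: BigDisj_def)
lemma sat_PLtd[simp]: "sat pl lt z (PLtd d i j) v = ltd lt d (v i) (v j)"
  by (simp add: PLtd_def ltd_def)
lemma evalt_ntimes[simp]: "evalt pl z v (ntimes N t) = ntU pl z N (evalt pl z v t)"
  by (induct N) auto
lemma ntU_int[simp]: "ntU (+) 0 N (x::int) = int N * x"
  by (induct N) (auto simp: algebra_simps)
lemma sat_Dform[simp]: "t \<noteq> y \<Longrightarrow> t \<noteq> c \<Longrightarrow>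
   sat pl lt z (Dform N y t c) v = (\<exists>s. v y = pl (ntU pl z N s) (v c))"
  by (simp add: Dform_def)

lemma sat_Alls: "sat pl lt z (Alls ns f) v = (\<forall>u. (\<forall>k. k \<notin> set ns \<longrightarrow> u k = v k) \<longrightarrow> sat pl lt z f u)"
proof (induct ns arbitrary: v)
  case Nil
  then show ?case by (auto intro: ext)
next
  case (Cons n ns)
  show ?case
  proof
    assume H: "sat pl lt z (Alls (n # ns) f) v"
    show "\<forall>u. (\<forall>k. k \<notin> set (n # ns) \<longrightarrow> u k = v k) \<longrightarrow> sat pl lt z f u"
    proof (intro allI impI)
      fix u assume A: "\<forall>k. k \<notin> set (n # ns) \<longrightarrow> u k = v k"
      from H have "sat pl lt z (Alls ns f) (v(n := u n))" by simp
      then show "sat pl lt z f u" using Cons A by auto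
    qed
  next
    assume H: "\<forall>u. (\<forall>k. k \<notin> set (n # ns) \<longrightarrow> u k = v k) \<longrightarrow> sat pl lt z f u"
    show "sat pl lt z (Alls (n # ns) f) v"
      using H by (auto simp: Cons)
  qed
qed

fun vbt :: "ptm \<Rightarrow> nat" where
  "vbt (PVar n) = Suc n"
| "vbt PZero = 0"
| "vbt (PPlus s t) = max (vbt s) (vbt t)"

fun vb :: "pfm \<Rightarrow> nat" where
  "vb (PEq s t) = max (vbt s) (vbt t)"
| "vb (PLt s t) = max (vbt s) (vbt t)"
| "vb (PNeg f) = vb f"
| "vb (PConj f g) = max (vb f) (vb g)"
| "vb (PEx n f) = max (Suc n) (vb f)"

lemma evalt_local: "(\<forall>k<vbt t. v k = w k) \<Longrightarrow> evalt pl z v t = evalt pl z w t"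
  by (induct t) auto

lemma sat_local: "(\<forall>k<vb f. v k = w k) \<Longrightarrow> sat pl lt z f v = sat pl lt z f w"
proof (induct f arbitrary: v w)
  case (PEq s t) then show ?case using evalt_local[of s v w] evalt_local[of t v w] by auto
next
  case (PLt s t) then show ?case using evalt_local[of s v w] evalt_local[of t v w] by auto
next
  case (PNeg f) then show ?case by auto
next
  case (PConj f g)
  have "sat pl lt z f v = sat pl lt z f w" by (rule PConj.hyps(1)) (use PConj.prems in auto)
  moreover have "sat pl lt z g v = sat pl lt z g w" by (rule PConj.hyps(2)) (use PConj.prems in auto)
  ultimately show ?case by simp
next
  case (PEx n f)
  have "\<And>a. sat pl lt z f (v(n := a)) = sat pl lt z f (w(n := a))"
    using PEx by (intro PEx.hyps) auto
  then show ?case by simp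
qed

fun rent :: "(nat \<Rightarrow> nat) \<Rightarrow> ptm \<Rightarrow> ptm" where
  "rent f (PVar n) = PVar (f n)"
| "rent f PZero = PZero"
| "rent f (PPlus s t) = PPlus (rent f s) (rent f t)"

fun ren :: "(nat \<Rightarrow> nat) \<Rightarrow> pfm \<Rightarrow> pfm" where
  "ren f (PEq s t) = PEq (rent f s) (rent f t)"
| "ren f (PLt s t) = PLt (rent f s) (rent f t)"
| "ren f (PNeg g) = PNeg (ren f g)"
| "ren f (PConj g h) = PConj (ren f g) (ren f h)"
| "ren f (PEx n g) = PEx (f n) (ren f g)"

lemma evalt_rent: "evalt pl z v (rent f t) = evalt pl z (v \<circ> f) t"
  by (induct t) auto

lemma sat_ren: "inj f \<Longrightarrow> sat pl lt z (ren f g) v = sat pl lt z g (v \<circ> f)"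
proof (induct g arbitrary: v)
  case (PEx n g)
  have "\<And>a. (v(f n := a)) \<circ> f = (v \<circ> f)(n := a)"
    using PEx.prems by (auto simp: fun_eq_iff inj_eq)
  have "sat pl lt z (ren f (PEx n g)) v = (\<exists>a. sat pl lt z (ren f g) (v(f n := a)))" by simp
  also have "\<dots> = (\<exists>a. sat pl lt z g (v(f n := a) \<circ> f))" using PEx.hyps PEx.prems by blast
  also have "\<dots> = (\<exists>a. sat pl lt z g ((v \<circ> f)(n := a)))" using \<open>\<And>a. (v(f n := a)) \<circ> f = (v \<circ> f)(n := a)\<close> by simp
  finally show ?case by (metis sat.simps(5))
qed (auto simp: evalt_rent)

section \<open>Translation to Cooper formulas\<close>

fun trt :: "(nat \<Rightarrow> nat) \<Rightarrow> ptm \<Rightarrow> num" where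
  "trt m (PVar k) = Bound (m k)"
| "trt m PZero = C 0"
| "trt m (PPlus s t) = Add (trt m s) (trt m t)"

fun tr :: "(nat \<Rightarrow> nat) \<Rightarrow> pfm \<Rightarrow> fm" where
  "tr m (PEq s t) = Eq (Sub (trt m s) (trt m t))"
| "tr m (PLt s t) = Lt (Sub (trt m s) (trt m t))"
| "tr m (PNeg f) = Not (tr m f)"
| "tr m (PConj f g) = And (tr m f) (tr m g)"
| "tr m (PEx n f) = E (tr (\<lambda>k. if k = n then 0 else Suc (m k)) f)"

lemma Inum_trt: "Inum bs (trt m t) = evalt (+) 0 (\<lambda>k. bs ! m k) t"
  by (induct t) auto

lemma Ifm_tr: "Ifm bbs bs (tr m f) = sat (+) (<) (0::int) f (\<lambda>k. bs ! m k)"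
proof (induct f arbitrary: m bs)
  case (PEx n f)
  have "\<And>x. (\<lambda>k. (x # bs) ! (if k = n then 0 else Suc (m k))) = (\<lambda>k. bs ! m k)(n := x)"
    by (auto simp: fun_eq_iff)
  then show ?case using PEx by simp
qed (auto simp: Inum_trt)

section \<open>Eventual periodicity of quantifier-free Cooper formulas\<close>

definition bey :: "bool \<Rightarrow> int \<Rightarrow> int \<Rightarrow> bool" where
  "bey d z x = (if d then z < x else x < z)"

lemma Inum_affine: "\<exists>c r. \<forall>x. Inum (x # bs) a = c * x + r"
proof (induct a)
  case (C c) then show ?case by (rule_tac x=0 in exI) auto
next
  case (Bound n) then show ?case
    by (cases n) (rule_tac x=1 in exI, rule_tac x=0 in exI, simp, rule_tac x=0 in exI, auto)
next
  case (CN n i a)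
  then obtain c r where cr: "\<forall>x. Inum (x # bs) a = c * x + r" by blast
  show ?case
  proof (cases n)
    case 0 then show ?thesis using cr by (rule_tac x="i + c" in exI, rule_tac x=r in exI) (auto simp: algebra_simps)
  next
    case (Suc m) then show ?thesis using cr
      by (rule_tac x="c" in exI, rule_tac x="i * bs ! m + r" in exI) (auto simp: algebra_simps)
  qed
next
  case (Neg a)
  then obtain c r where cr: "\<forall>x. Inum (x # bs) a = c * x + r" by blast
  then show ?case by (rule_tac x="-c" in exI, rule_tac x="-r" in exI) auto
next
  case (Add a b)
  then obtain c r c' r' where "\<forall>x. Inum (x # bs) a = c * x + r" "\<forall>x. Inum (x # bs) b = c' * x + r'" by blast
  then show ?case by (rule_tac x="c+c'" in exI, rule_tac x="r+r'" in exI) (auto simp: algebra_simps)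
next
  case (Sub a b)
  then obtain c r c' r' where "\<forall>x. Inum (x # bs) a = c * x + r" "\<forall>x. Inum (x # bs) b = c' * x + r'" by blast
  then show ?case by (rule_tac x="c-c'" in exI, rule_tac x="r-r'" in exI) (auto simp: algebra_simps)
next
  case (Mul i a)
  then obtain c r where cr: "\<forall>x. Inum (x # bs) a = c * x + r" by blast
  then show ?case by (rule_tac x="i*c" in exI, rule_tac x="i*r" in exI) (auto simp: algebra_simps)
qed

lemma sgn_eventually:
  fixes c r :: int
  shows "\<exists>z. \<forall>x. bey d z x \<longrightarrow> sgn (c * x + r) = (if c = 0 then sgn r else if d then sgn c else - sgn c)"
proof (cases d)
  case dT: True
  show ?thesis
  proof (rule exI[of _ "\<bar>r\<bar>"], intro allI impI)
    fix x assume "bey d \<bar>r\<bar> x"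
    then have x: "\<bar>r\<bar> < x" using dT by (simp add: bey_def)
    consider "c > 0" | "c = 0" | "c < 0" by linarith
    then show "sgn (c * x + r) = (if c = 0 then sgn r else if d then sgn c else - sgn c)"
    proof cases
      case 1
      then have "c * x \<ge> 1 * x" using x by (intro mult_right_mono) auto
      then show ?thesis using 1 x dT by auto
    next
      case 2 then show ?thesis by auto
    next
      case 3
      then have "c * x \<le> (-1) * x" using x by (intro mult_right_mono) auto
      then show ?thesis using 3 x dT by auto
    qed
  qed
next
  case dF: False
  show ?thesis
  proof (rule exI[of _ "-\<bar>r\<bar>"], intro allI impI)
    fix x assume "bey d (-\<bar>r\<bar>) x"
    then have x: "x < -\<bar>r\<bar>" using dF by (simp add: bey_def)
    consider "c > 0" | "c = 0" | "c < 0" by linarith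
    then show "sgn (c * x + r) = (if c = 0 then sgn r else if d then sgn c else - sgn c)"
    proof cases
      case 1
      then have "c * (-x) \<ge> 1 * (-x)" using x by (intro mult_right_mono) auto
      then show ?thesis using 1 x dF by auto
    next
      case 2 then show ?thesis by auto
    next
      case 3
      then have "c * (-x) \<le> (-1) * (-x)" using x by (intro mult_right_mono) auto
      then show ?thesis using 3 x dF by auto
    qed
  qed
qed

lemma Inum_sgn_eventually: "\<exists>z. \<forall>x x'. bey d z x \<and> bey d z x' \<longrightarrow>
     sgn (Inum (x # bs) a) = sgn (Inum (x' # bs) a)"
proof -
  obtain c r where cr: "\<forall>x. Inum (x # bs) a = c * x + r" using Inum_affine by blast
  obtain z where "\<forall>x. bey d z x \<longrightarrow> sgn (c * x + r) = (if c = 0 then sgn r else if d then sgn c else - sgn c)" using sgn_eventually by blast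
  then show ?thesis using cr by (intro exI[of _ z]) auto
qed

lemma sgn_cases_int: "sgn (a::int) = sgn b \<Longrightarrow> (a < 0 \<longleftrightarrow> b < 0) \<and> (a = 0 \<longleftrightarrow> b = 0) \<and> (a > 0 \<longleftrightarrow> b > 0)"
  by (auto simp: sgn_if split: if_splits)

definition perq :: "bool \<Rightarrow> (int \<Rightarrow> int list \<Rightarrow> bool) \<Rightarrow> bool" where
  "perq d P = (\<exists>N>0. \<forall>bs. \<exists>z. \<forall>x x'. bey d z x \<and> bey d z x' \<and> N dvd (x - x') \<longrightarrow> (P x bs \<longleftrightarrow> P x' bs))"

lemma perq_sgn: "perq d (\<lambda>x bs. Q (sgn (Inum (x # bs) a)))"
  unfolding perq_def
proof (rule exI[of _ 1], intro conjI allI)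
  show "(0::int) < 1" by simp
  fix bs
  obtain z where z: "\<forall>x x'. bey d z x \<and> bey d z x' \<longrightarrow> sgn (Inum (x # bs) a) = sgn (Inum (x' # bs) a)"
    using Inum_sgn_eventually by blast
  show "\<exists>z. \<forall>x x'. bey d z x \<and> bey d z x' \<and> 1 dvd (x - x') \<longrightarrow> Q (sgn (Inum (x # bs) a)) = Q (sgn (Inum (x' # bs) a))"
  proof (intro exI[of _ z] allI impI)
    fix x x' assume "bey d z x \<and> bey d z x' \<and> 1 dvd (x - x')"
    then have "sgn (Inum (x # bs) a) = sgn (Inum (x' # bs) a)" using z by blast
    then show "Q (sgn (Inum (x # bs) a)) = Q (sgn (Inum (x' # bs) a))" by (rule arg_cong)
  qed
qed

lemma perq_const: "perq d (\<lambda>x bs. Q bs)"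
  unfolding perq_def by (intro exI[of _ 1] conjI allI) auto

lemma perq_sgn': "(\<And>s. P s = Q (sgn s)) \<Longrightarrow> perq d (\<lambda>x bs. P (Inum (x # bs) a))"
  using perq_sgn[of d Q a] by simp

lemma bey_max: "\<exists>z. \<forall>x. bey d z x \<longrightarrow> bey d z1 x \<and> bey d z2 x"
  by (rule exI[of _ "if d then max z1 z2 else min z1 z2"]) (auto simp: bey_def)

lemma perq_bin: assumes "perq d P" "perq d Q"
  shows "perq d (\<lambda>x bs. Fn (P x bs) (Q x bs))"
proof -
  obtain N1 where N1: "N1 > 0" "\<forall>bs. \<exists>z. \<forall>x x'. bey d z x \<and> bey d z x' \<and> N1 dvd (x - x') \<longrightarrow> (P x bs \<longleftrightarrow> P x' bs)"
    using assms(1) unfolding perq_def by blast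
  obtain N2 where N2: "N2 > 0" "\<forall>bs. \<exists>z. \<forall>x x'. bey d z x \<and> bey d z x' \<and> N2 dvd (x - x') \<longrightarrow> (Q x bs \<longleftrightarrow> Q x' bs)"
    using assms(2) unfolding perq_def by blast
  show ?thesis unfolding perq_def
  proof (rule exI[of _ "N1 * N2"], intro conjI allI)
    show "N1 * N2 > 0" using N1 N2 by simp
    fix bs
    obtain z1 where z1: "\<forall>x x'. bey d z1 x \<and> bey d z1 x' \<and> N1 dvd (x - x') \<longrightarrow> (P x bs \<longleftrightarrow> P x' bs)"
      using N1 by blast
    obtain z2 where z2: "\<forall>x x'. bey d z2 x \<and> bey d z2 x' \<and> N2 dvd (x - x') \<longrightarrow> (Q x bs \<longleftrightarrow> Q x' bs)"
      using N2 by blast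
    obtain z where z: "\<forall>x. bey d z x \<longrightarrow> bey d z1 x \<and> bey d z2 x" using bey_max by blast
    show "\<exists>z. \<forall>x x'. bey d z x \<and> bey d z x' \<and> N1 * N2 dvd (x - x') \<longrightarrow> Fn (P x bs) (Q x bs) = Fn (P x' bs) (Q x' bs)"
    proof (rule exI[of _ z], intro allI impI)
      fix x x' assume H: "bey d z x \<and> bey d z x' \<and> N1 * N2 dvd (x - x')"
      then have d1: "N1 dvd (x - x')" and d2: "N2 dvd (x - x')" using dvd_mult_left dvd_mult_right by blast+
      have b: "bey d z1 x" "bey d z1 x'" "bey d z2 x" "bey d z2 x'" using H z by auto
      have "P x bs = P x' bs" using z1 b d1 by blast
      moreover have "Q x bs = Q x' bs" using z2 b d2 by blast
      ultimately show "Fn (P x bs) (Q x bs) = Fn (P x' bs) (Q x' bs)" by simp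
    qed
  qed
qed

lemma perq_dvd: "perq d (\<lambda>x bs. i dvd Inum (x # bs) a)"
proof (cases "i = 0")
  case True
  have "perq d (\<lambda>x bs. (\<lambda>s. s = 0) (Inum (x # bs) a))" by (rule perq_sgn'[of "\<lambda>s. s = 0" "\<lambda>s. s = 0"]) (auto simp: sgn_if)
  then show ?thesis using True by simp
next
  case False
  show ?thesis unfolding perq_def
  proof (rule exI[of _ "\<bar>i\<bar>"], intro conjI allI)
    show "\<bar>i\<bar> > 0" using False by simp
    fix bs
    obtain c r where cr: "\<forall>x. Inum (x # bs) a = c * x + r" using Inum_affine by blast
    show "\<exists>z. \<forall>x x'. bey d z x \<and> bey d z x' \<and> \<bar>i\<bar> dvd (x - x') \<longrightarrow> (i dvd Inum (x # bs) a) = (i dvd Inum (x' # bs) a)"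
    proof (rule exI[of _ 0], intro allI impI)
      fix x x' assume "bey d 0 x \<and> bey d 0 x' \<and> \<bar>i\<bar> dvd (x - x')"
      then have "i dvd (x - x')" by simp
      then have "i dvd c * (x - x')" by (rule dvd_mult)
      moreover have "c * (x - x') = (c * x + r) - (c * x' + r)" by (simp add: algebra_simps)
      ultimately have h: "i dvd (c * x + r) - (c * x' + r)" by simp
      have "(i dvd c * x + r) = (i dvd c * x' + r)"
      proof
        assume "i dvd c * x + r"
        then have "i dvd (c * x + r) - ((c * x + r) - (c * x' + r))" using h by (rule dvd_diff)
        moreover have "(c * x + r) - ((c * x + r) - (c * x' + r)) = c * x' + r" by simp
        ultimately show "i dvd c * x' + r" by metis
      next
        assume "i dvd c * x' + r"
        then have "i dvd (c * x' + r) + ((c * x + r) - (c * x' + r))" using h by (rule dvd_add)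
        moreover have "(c * x' + r) + ((c * x + r) - (c * x' + r)) = c * x + r" by simp
        ultimately show "i dvd c * x + r" by metis
      qed
      then show "(i dvd Inum (x # bs) a) = (i dvd Inum (x' # bs) a)"
        using cr by simp
    qed
  qed
qed


lemma perq_qfree: "qfree q \<Longrightarrow> perq d (\<lambda>x bs. Ifm bbs (x # bs) q)"
proof (induct q)
  case T then show ?case using perq_const[of d "\<lambda>_. True"] by simp
next
  case F then show ?case using perq_const[of d "\<lambda>_. False"] by simp
next
  case (Lt a) then show ?case using perq_sgn'[of "\<lambda>s. s < 0" "\<lambda>s. s < 0" d a] by (auto simp: sgn_if)
next
  case (Le a) then show ?case using perq_sgn'[of "\<lambda>s. s \<le> 0" "\<lambda>s. s \<le> 0" d a] by (auto simp: sgn_if)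
next
  case (Gt a) then show ?case using perq_sgn'[of "\<lambda>s. s > 0" "\<lambda>s. s > 0" d a] by (auto simp: sgn_if)
next
  case (Ge a) then show ?case using perq_sgn'[of "\<lambda>s. s \<ge> 0" "\<lambda>s. s \<ge> 0" d a] by (auto simp: sgn_if)
next
  case (Eq a) then show ?case using perq_sgn'[of "\<lambda>s. s = 0" "\<lambda>s. s = 0" d a] by (auto simp: sgn_if)
next
  case (NEq a) then show ?case using perq_sgn'[of "\<lambda>s. s \<noteq> 0" "\<lambda>s. s \<noteq> 0" d a] by (auto simp: sgn_if)
next
  case (Dvd i a) then show ?case using perq_dvd[of d i a] by simp
next
  case (NDvd i a) then show ?case using perq_bin[OF perq_dvd[of d i a] perq_dvd[of d i a], of "\<lambda>p q. \<not> p"] by simp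
next
  case (Not p)
  have "perq d (\<lambda>x bs. (\<lambda>a b. \<not> a) (Ifm bbs (x # bs) p) (Ifm bbs (x # bs) p))"
    by (rule perq_bin) (use Not in simp_all)
  then show ?case by simp
next
  case (And p q)
  have "perq d (\<lambda>x bs. (\<and>) (Ifm bbs (x # bs) p) (Ifm bbs (x # bs) q))"
    by (rule perq_bin) (use And in simp_all)
  then show ?case by simp
next
  case (Or p q)
  have "perq d (\<lambda>x bs. (\<or>) (Ifm bbs (x # bs) p) (Ifm bbs (x # bs) q))"
    by (rule perq_bin) (use Or in simp_all)
  then show ?case by simp
next
  case (Imp p q)
  have "perq d (\<lambda>x bs. (\<longrightarrow>) (Ifm bbs (x # bs) p) (Ifm bbs (x # bs) q))"
    by (rule perq_bin) (use Imp in simp_all)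
  then show ?case by simp
next
  case (Iff p q)
  have "perq d (\<lambda>x bs. (=) (Ifm bbs (x # bs) p) (Ifm bbs (x # bs) q))"
    by (rule perq_bin) (use Iff in simp_all)
  then show ?case by simp
next
  case (E p) then show ?case by simp
next
  case (A p) then show ?case by simp
next
  case (Closed n) then show ?case using perq_const[of d "\<lambda>_. bbs ! n"] by simp
next
  case (NClosed n) then show ?case using perq_const[of d "\<lambda>_. \<not> bbs ! n"] by simp
qed

lemma Zper: "\<exists>N>0. \<forall>v. \<exists>z. \<forall>x x'. bey d z x \<and> bey d z x' \<and> int N dvd (x - x') \<longrightarrow>
   (sat (+) (<) (0::int) f (v(0 := x)) \<longleftrightarrow> sat (+) (<) (0::int) f (v(0 := x')))"
proof -
  define L where "L = Suc (vb f)"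
  define q where "q = pa (tr id f)"
  have qf: "qfree q" using mirqe q_def by blast
  have eq: "\<And>bs. Ifm [] bs q = sat (+) (<) (0::int) f (\<lambda>k. bs ! k)"
    using mirqe[of "[]" _ "tr id f"] Ifm_tr[of "[]" _ id f] q_def by simp
  obtain N where N: "N > 0" "\<forall>bs. \<exists>z. \<forall>x x'. bey d z x \<and> bey d z x' \<and> N dvd (x - x') \<longrightarrow>
       (Ifm [] (x # bs) q \<longleftrightarrow> Ifm [] (x' # bs) q)"
    using perq_qfree[OF qf, of d "[]"] unfolding perq_def by blast
  have loc: "\<And>v x. sat (+) (<) (0::int) f (v(0 := x)) = Ifm [] (x # map v [1..<L]) q"
  proof -
    fix v :: "nat \<Rightarrow> int" and x :: int
    have "\<forall>k<vb f. (v(0 := x)) k = (\<lambda>k. (x # map v [1..<L]) ! k) k"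
    proof (intro allI impI)
      fix k assume "k < vb f"
      then show "(v(0 := x)) k = (\<lambda>k. (x # map v [1..<L]) ! k) k"
        by (cases k) (simp_all add: L_def del: upt_Suc)
    qed
    then show "sat (+) (<) (0::int) f (v(0 := x)) = Ifm [] (x # map v [1..<L]) q"
      using sat_local eq by metis
  qed
  show ?thesis
  proof (rule exI[of _ "nat N"], intro conjI allI)
    show "nat N > 0" using N by simp
    fix v
    obtain z where z: "\<forall>x x'. bey d z x \<and> bey d z x' \<and> N dvd (x - x') \<longrightarrow>
       (Ifm [] (x # map v [1..<L]) q \<longleftrightarrow> Ifm [] (x' # map v [1..<L]) q)" using N by blast
    show "\<exists>z. \<forall>x x'. bey d z x \<and> bey d z x' \<and> int (nat N) dvd (x - x') \<longrightarrow>
       (sat (+) (<) (0::int) f (v(0 := x)) \<longleftrightarrow> sat (+) (<) (0::int) f (v(0 := x')))"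
      using z N loc by (intro exI[of _ z]) auto
  qed
qed

lemma transfer:
  assumes "elem_emb pl lt z e" "sat (+) (<) (0::int) (Alls ns f) v" "\<forall>k. k \<notin> set ns \<longrightarrow> u k = e (v k)"
  shows "sat pl lt z f u"
proof -
  have "sat pl lt z (Alls ns f) (e \<circ> v)" using assms(1,2) unfolding elem_emb_def by blast
  then show ?thesis using assms(3) unfolding sat_Alls by auto
qed

definition DU :: "('u \<Rightarrow> 'u \<Rightarrow> 'u) \<Rightarrow> 'u \<Rightarrow> (int \<Rightarrow> 'u) \<Rightarrow> nat \<Rightarrow> nat \<Rightarrow> 'u \<Rightarrow> bool" where
  "DU pl z e N k y = (\<exists>s. y = pl (ntU pl z N s) (e (int k)))"

lemma ltd_bey: "ltd (<) d a b = bey d a b"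
  by (simp add: ltd_def bey_def)

lemma U_cover:
  assumes em: "elem_emb pl lt z e" and N: "N > 0"
  shows "\<exists>k<N. DU pl z e N k y"
proof -
  define v :: "nat \<Rightarrow> int" where "v n = int (n - 2)" for n
  define f where "f = BigDisj (map (\<lambda>k. Dform N 0 1 (k + 2)) [0..<N])"
  have "sat (+) (<) (0::int) (Alls [0] f) v"
  proof (unfold sat_Alls, intro allI impI)
    fix u :: "nat \<Rightarrow> int" assume u: "\<forall>k. k \<notin> set [0] \<longrightarrow> u k = v k"
    have "u 0 = int N * (u 0 div int N) + u 0 mod int N" by simp
    moreover have "nat (u 0 mod int N) < N" using N
      by (simp add: nat_less_iff)
    moreover have "u (nat (u 0 mod int N) + 2) = int (nat (u 0 mod int N))"
      using u by (simp add: v_def)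
    ultimately show "sat (+) (<) 0 f u" unfolding f_def
      by (auto intro!: bexI[of _ "nat (u 0 mod int N)"] exI[of _ "u 0 div int N"])
  qed
  then have "sat pl lt z f ((e \<circ> v)(0 := y))" by (rule transfer[OF em]) auto
  then show ?thesis unfolding f_def DU_def by (auto simp: v_def)
qed

lemma U_unb:
  assumes em: "elem_emb pl lt z e" and N: "N > 0" and k: "k < N"
  shows "\<exists>y. ltd lt d a y \<and> ltd lt d b y \<and> DU pl z e N k y"
proof -
  define v :: "nat \<Rightarrow> int" where "v n = int k" for n
  define f where "f = PEx 2 (PConj (PLtd d 0 2) (PConj (PLtd d 1 2) (Dform N 2 3 4)))"
  have "sat (+) (<) (0::int) (Alls [0, 1] f) v"
  proof (unfold sat_Alls, intro allI impI)
    fix u :: "nat \<Rightarrow> int" assume u: "\<forall>n. n \<notin> set [0, 1] \<longrightarrow> u n = v n"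
    define s where "s = (if d then \<bar>u 0\<bar> + \<bar>u 1\<bar> + 1 else - (\<bar>u 0\<bar> + \<bar>u 1\<bar> + 1 + int k))"
    define y where "y = int N * s + int k"
    have "int N * s \<ge> 1 * s" if "d" using N that by (intro mult_right_mono) (auto simp: s_def)
    moreover have "int N * s \<le> s" if "\<not> d"
    proof -
      have "s \<le> 0" using that by (simp add: s_def)
      then have "int N * s \<le> 1 * s" using N by (intro mult_right_mono_neg) auto
      then show ?thesis by simp
    qed
    moreover have "d \<Longrightarrow> s > \<bar>u 0\<bar> + \<bar>u 1\<bar>" "\<not> d \<Longrightarrow> s + int k < - \<bar>u 0\<bar> - \<bar>u 1\<bar>"
      by (auto simp: s_def)
    ultimately have "bey d (u 0) y \<and> bey d (u 1) y"
      by (cases d) (auto simp: bey_def y_def)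
    then have b: "ltd (<) d (u 0) y" "ltd (<) d (u 1) y" by (simp_all add: ltd_bey)
    have u4: "u 4 = int k" using u by (simp add: v_def)
    have s1: "sat (+) (<) 0 f u \<longleftrightarrow> (\<exists>a. ltd (<) d (u 0) a \<and> ltd (<) d (u 1) a \<and> (\<exists>s. a = int N * s + u 4))"
      unfolding f_def by simp
    show "sat (+) (<) 0 f u" unfolding s1 using b u4 y_def by (intro exI[of _ y]) auto
  qed
  then have "sat pl lt z f ((e \<circ> v)(0 := a, 1 := b))" by (rule transfer[OF em]) auto
  then show ?thesis unfolding f_def DU_def by (auto simp: v_def)
qed

lemma U_trans:
  assumes em: "elem_emb pl lt z e" and "lt a b" "lt b c"
  shows "lt a c"
proof -
  define v :: "nat \<Rightarrow> int" where "v n = 0" for n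
  define f where "f = PImp (PConj (PLt (PVar 0) (PVar 1)) (PLt (PVar 1) (PVar 2))) (PLt (PVar 0) (PVar 2))"
  have "sat (+) (<) (0::int) (Alls [0, 1, 2] f) v"
    unfolding sat_Alls f_def by auto
  then have "sat pl lt z f ((e \<circ> v)(0 := a, 1 := b, 2 := c))" by (rule transfer[OF em]) auto
  then show ?thesis unfolding f_def using assms by auto
qed

lemma ltd_trans:
  assumes em: "elem_emb pl lt z e" and "ltd lt d a b" "ltd lt d b c"
  shows "ltd lt d a c"
  using assms U_trans[OF em] by (cases d) (auto simp: ltd_def)

definition PerK :: "bool \<Rightarrow> nat \<Rightarrow> nat \<Rightarrow> nat \<Rightarrow> nat \<Rightarrow> pfm \<Rightarrow> pfm" where
  "PerK d N Zv Tv c f = PDisj (PAll 0 (PImp (PConj (PLtd d Zv 0) (Dform N 0 Tv c)) f))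
      (PAll 0 (PImp (PConj (PLtd d Zv 0) (Dform N 0 Tv c)) (PNeg f)))"

lemma sat_PerK: "Zv \<noteq> 0 \<Longrightarrow> c \<noteq> 0 \<Longrightarrow> Tv \<noteq> 0 \<Longrightarrow> Tv \<noteq> c \<Longrightarrow>
  sat pl lt z (PerK d N Zv Tv c f) w \<longleftrightarrow>
   ((\<forall>y. ltd lt d (w Zv) y \<and> (\<exists>s. y = pl (ntU pl z N s) (w c)) \<longrightarrow> sat pl lt z f (w(0 := y))) \<or>
    (\<forall>y. ltd lt d (w Zv) y \<and> (\<exists>s. y = pl (ntU pl z N s) (w c)) \<longrightarrow> \<not> sat pl lt z f (w(0 := y))))"
  by (simp add: PerK_def)

lemma sat_PsiG: "sat pl lt z (PEx Zv (BigConj (map g [0..<N]))) u \<longleftrightarrow> (\<exists>a. \<forall>k<N. sat pl lt z (g k) (u(Zv := a)))"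
  by (simp add: atLeast0LessThan) (meson lessThan_iff)

lemma loc_upd: "vb f \<le> Zv \<Longrightarrow> sat pl lt z f ((u(Zv := a))(0 := y)) = sat pl lt z f (u(0 := y))"
  by (rule sat_local) auto

lemma U_per:
  assumes em: "elem_emb pl lt z e"
  shows "\<exists>N>0. \<forall>u. \<exists>zz. \<forall>k<N.
     (\<forall>y. ltd lt d zz y \<and> DU pl z e N k y \<longrightarrow> sat pl lt z f (u(0 := y))) \<or>
     (\<forall>y. ltd lt d zz y \<and> DU pl z e N k y \<longrightarrow> \<not> sat pl lt z f (u(0 := y)))"
proof -
  obtain N where N: "N > 0" and per: "\<forall>v. \<exists>zz. \<forall>x x'. bey d zz x \<and> bey d zz x' \<and> int N dvd (x - x') \<longrightarrow>
     (sat (+) (<) (0::int) f (v(0 := x)) \<longleftrightarrow> sat (+) (<) (0::int) f (v(0 := x')))"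
    using Zper[of d f] by blast
  define L where "L = Suc (vb f)"
  define Zv where "Zv = L"
  define Tv where "Tv = Suc L"
  define Cb where "Cb = L + 2"
  define Psi where "Psi = PEx Zv (BigConj (map (\<lambda>k. PerK d N Zv Tv (Cb + k) f) [0..<N]))"
  define v :: "nat \<Rightarrow> int" where "v n = int (n - Cb)" for n
  have neq: "Zv \<noteq> 0" "\<And>k. Cb + k \<noteq> 0" "Tv \<noteq> 0" "\<And>k. Tv \<noteq> Cb + k" "\<And>k. Cb + k \<noteq> Zv"
    by (auto simp: Zv_def Cb_def Tv_def L_def)
  note satPsi = sat_PsiG[where Zv=Zv and g="\<lambda>k. PerK d N Zv Tv (Cb + k) f" and N=N, folded Psi_def]
  have vbZ: "vb f \<le> Zv" by (simp add: Zv_def L_def)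
  note loc = loc_upd[OF vbZ]
  have Z: "sat (+) (<) (0::int) (Alls [1..<L] Psi) v"
  proof (unfold sat_Alls, intro allI impI)
    fix u :: "nat \<Rightarrow> int" assume u: "\<forall>k. k \<notin> set [1..<L] \<longrightarrow> u k = v k"
    obtain zz where zz: "\<forall>x x'. bey d zz x \<and> bey d zz x' \<and> int N dvd (x - x') \<longrightarrow>
       (sat (+) (<) (0::int) f (u(0 := x)) \<longleftrightarrow> sat (+) (<) (0::int) f (u(0 := x')))" using per by blast
    have "\<forall>k<N. sat (+) (<) (0::int) (PerK d N Zv Tv (Cb + k) f) (u(Zv := zz))"
    proof (intro allI impI)
      fix k assume k: "k < N"
      have uc: "u (Cb + k) = int k" using u by (simp add: v_def Cb_def)
      have "(\<forall>y. bey d zz y \<and> (\<exists>s. y = int N * s + int k) \<longrightarrow> sat (+) (<) (0::int) f (u(0 := y))) \<or>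
            (\<forall>y. bey d zz y \<and> (\<exists>s. y = int N * s + int k) \<longrightarrow> \<not> sat (+) (<) (0::int) f (u(0 := y)))"
      proof (cases "\<exists>y0. bey d zz y0 \<and> (\<exists>s. y0 = int N * s + int k) \<and> sat (+) (<) (0::int) f (u(0 := y0))")
        case True
        then obtain y0 s0 where y0: "bey d zz y0" "y0 = int N * s0 + int k" "sat (+) (<) (0::int) f (u(0 := y0))" by blast
        have "\<forall>y. bey d zz y \<and> (\<exists>s. y = int N * s + int k) \<longrightarrow> sat (+) (<) (0::int) f (u(0 := y))"
        proof (intro allI impI)
          fix y assume "bey d zz y \<and> (\<exists>s. y = int N * s + int k)"
          then obtain s where y: "bey d zz y" "y = int N * s + int k" by blast
          have "y - y0 = int N * (s - s0)" using y y0 by (simp add: algebra_simps)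
          then have "int N dvd (y - y0)" by simp
          then show "sat (+) (<) (0::int) f (u(0 := y))" using zz y0 y by blast
        qed
        then show ?thesis by blast
      next
        case False then show ?thesis by blast
      qed
      then show "sat (+) (<) (0::int) (PerK d N Zv Tv (Cb + k) f) (u(Zv := zz))"
        using neq uc by (simp add: sat_PerK ltd_bey loc)
    qed
    then show "sat (+) (<) (0::int) Psi u" unfolding satPsi by blast
  qed
  show ?thesis
  proof (rule exI[of _ N], intro conjI allI)
    show "N > 0" by (rule N)
    fix u
    define u' where "u' n = (if 1 \<le> n \<and> n < L then u n else e (v n))" for n
    have "sat pl lt z Psi u'" by (rule transfer[OF em Z]) (auto simp: u'_def)
    then obtain a where a: "\<forall>k<N. sat pl lt z (PerK d N Zv Tv (Cb + k) f) (u'(Zv := a))" unfolding satPsi by blast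
    have loc2: "\<And>y. sat pl lt z f ((u'(Zv := a))(0 := y)) = sat pl lt z f (u(0 := y))"
    proof -
      fix y
      have "sat pl lt z f ((u'(Zv := a))(0 := y)) = sat pl lt z f (u'(0 := y))" by (rule loc)
      also have "\<dots> = sat pl lt z f (u(0 := y))"
        by (rule sat_local) (auto simp: u'_def L_def)
      finally show "sat pl lt z f ((u'(Zv := a))(0 := y)) = sat pl lt z f (u(0 := y))" .
    qed
    have uc: "\<And>k. u' (Cb + k) = e (int k)" by (simp add: u'_def v_def Cb_def)
    show "\<exists>zz. \<forall>k<N. (\<forall>y. ltd lt d zz y \<and> DU pl z e N k y \<longrightarrow> sat pl lt z f (u(0 := y))) \<or>
       (\<forall>y. ltd lt d zz y \<and> DU pl z e N k y \<longrightarrow> \<not> sat pl lt z f (u(0 := y)))"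
    proof (rule exI[of _ a], intro allI impI)
      fix k assume "k < N"
      then have "sat pl lt z (PerK d N Zv Tv (Cb + k) f) (u'(Zv := a))" using a by blast
      then show "(\<forall>y. ltd lt d a y \<and> DU pl z e N k y \<longrightarrow> sat pl lt z f (u(0 := y))) \<or>
       (\<forall>y. ltd lt d a y \<and> DU pl z e N k y \<longrightarrow> \<not> sat pl lt z f (u(0 := y)))"
        using neq uc by (simp add: sat_PerK DU_def loc2)
    qed
  qed
qed

lemma def1_I: "(\<forall>n. n \<noteq> 0 \<longrightarrow> v n \<in> Cs) \<Longrightarrow> {a. sat pl lt z f (v(0 := a))} \<in> def1 pl lt z Cs"
  unfolding def1_def by blast

lemma def2_I: "(\<forall>n. n \<noteq> 0 \<and> n \<noteq> 1 \<longrightarrow> v n \<in> Cs) \<Longrightarrow>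
   {(a, b). sat pl lt z f (v(0 := a, 1 := b))} \<in> def2 pl lt z Cs"
  unfolding def2_def by blast

lemma def1_E: "D \<in> def1 pl lt z Cs \<Longrightarrow>
  (\<And>f v. (\<forall>n. n \<noteq> 0 \<longrightarrow> v n \<in> Cs) \<Longrightarrow> D = {a. sat pl lt z f (v(0 := a))} \<Longrightarrow> P) \<Longrightarrow> P"
  unfolding def1_def by blast

lemma def2_E: "D \<in> def2 pl lt z Cs \<Longrightarrow>
  (\<And>f v. (\<forall>n. n \<noteq> 0 \<and> n \<noteq> 1 \<longrightarrow> v n \<in> Cs) \<Longrightarrow> D = {(a, b). sat pl lt z f (v(0 := a, 1 := b))} \<Longrightarrow> P) \<Longrightarrow> P"
  unfolding def2_def by blast

lemma def1_mono: "Cs \<subseteq> Cs' \<Longrightarrow> D \<in> def1 pl lt z Cs \<Longrightarrow> D \<in> def1 pl lt z Cs'"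
  unfolding def1_def by blast

lemma def2_mono: "Cs \<subseteq> Cs' \<Longrightarrow> D \<in> def2 pl lt z Cs \<Longrightarrow> D \<in> def2 pl lt z Cs'"
  unfolding def2_def by blast

lemma def1_compl: "D \<in> def1 pl lt z Cs \<Longrightarrow> - D \<in> def1 pl lt z Cs"
proof (erule def1_E)
  fix f v assume v: "\<forall>n. n \<noteq> 0 \<longrightarrow> v n \<in> Cs" and D: "D = {a. sat pl lt z f (v(0 := a))}"
  have eq: "- D = {a. sat pl lt z (PNeg f) (v(0 := a))}" using D by auto
  show "- D \<in> def1 pl lt z Cs" unfolding eq by (rule def1_I[OF v])
qed

lemma def2_compl: "D \<in> def2 pl lt z Cs \<Longrightarrow> - D \<in> def2 pl lt z Cs"
proof (erule def2_E)
  fix f v assume v: "\<forall>n. n \<noteq> 0 \<and> n \<noteq> 1 \<longrightarrow> v n \<in> Cs" and D: "D = {(a, b). sat pl lt z f (v(0 := a, 1 := b))}"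
  have eq: "- D = {(a, b). sat pl lt z (PNeg f) (v(0 := a, 1 := b))}" using D by auto
  show "- D \<in> def2 pl lt z Cs" unfolding eq by (rule def2_I[OF v])
qed

lemma def1_int: assumes "D \<in> def1 pl lt z Cs" "D' \<in> def1 pl lt z Cs"
  shows "D \<inter> D' \<in> def1 pl lt z Cs"
proof -
  obtain f v where v: "\<forall>n. n \<noteq> 0 \<longrightarrow> v n \<in> Cs" and D: "D = {a. sat pl lt z f (v(0 := a))}"
    using assms(1) by (rule def1_E)
  obtain g w where w: "\<forall>n. n \<noteq> 0 \<longrightarrow> w n \<in> Cs" and D': "D' = {a. sat pl lt z g (w(0 := a))}"
    using assms(2) by (rule def1_E)
  define f1 where "f1 n = (if n = 0 then 0 else 2 * n)" for n :: nat
  define f2 where "f2 n = (if n = 0 then 0 else 2 * n + 1)" for n :: nat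
  define u where "u k = (if k = 0 then v 0 else if even k then v (k div 2) else if k = 1 then v 1 else w (k div 2))" for k
  have i1: "inj f1" unfolding inj_def f1_def by auto
  have i2: "inj f2" unfolding inj_def f2_def by auto
  have c1: "\<And>a. (u(0 := a)) \<circ> f1 = v(0 := a)" by (auto simp: fun_eq_iff u_def f1_def)
  have c2: "\<And>a. (u(0 := a)) \<circ> f2 = w(0 := a)" by (auto simp: fun_eq_iff u_def f2_def)
  have uC: "\<forall>n. n \<noteq> 0 \<longrightarrow> u n \<in> Cs"
  proof (intro allI impI)
    fix n :: nat assume "n \<noteq> 0"
    then show "u n \<in> Cs" using v w by (auto simp: u_def elim!: oddE)
  qed
  have eq: "D \<inter> D' = {a. sat pl lt z (PConj (ren f1 f) (ren f2 g)) (u(0 := a))}"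
    using D D' by (simp add: sat_ren[OF i1] sat_ren[OF i2] c1 c2 Collect_conj_eq)
  show ?thesis unfolding eq by (rule def1_I[OF uC])
qed

lemma def2_int: assumes "D \<in> def2 pl lt z Cs" "D' \<in> def2 pl lt z Cs"
  shows "D \<inter> D' \<in> def2 pl lt z Cs"
proof -
  obtain f v where v: "\<forall>n. n \<noteq> 0 \<and> n \<noteq> 1 \<longrightarrow> v n \<in> Cs" and D: "D = {(a, b). sat pl lt z f (v(0 := a, 1 := b))}"
    using assms(1) by (rule def2_E)
  obtain g w where w: "\<forall>n. n \<noteq> 0 \<and> n \<noteq> 1 \<longrightarrow> w n \<in> Cs" and D': "D' = {(a, b). sat pl lt z g (w(0 := a, 1 := b))}"
    using assms(2) by (rule def2_E)
  define f1 where "f1 n = (if n < 2 then n else 2 * n)" for n :: nat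
  define f2 where "f2 n = (if n < 2 then n else 2 * n + 1)" for n :: nat
  define u where "u k = (if k < 2 then v k else if even k then (if k = 2 then v 2 else v (k div 2))
                          else if k = 3 then v 2 else w (k div 2))" for k
  have i1: "inj f1" unfolding inj_def f1_def by auto
  have i2: "inj f2" unfolding inj_def f2_def by auto
  have c1: "\<And>a b. (u(0 := a, 1 := b)) \<circ> f1 = v(0 := a, 1 := b)"
    by (auto simp: fun_eq_iff u_def f1_def)
  have c2: "\<And>a b. (u(0 := a, 1 := b)) \<circ> f2 = w(0 := a, 1 := b)"
  proof -
    fix a b
    show "(u(0 := a, 1 := b)) \<circ> f2 = w(0 := a, 1 := b)"
    proof
      fix n
      show "((u(0 := a, 1 := b)) \<circ> f2) n = (w(0 := a, 1 := b)) n"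
      proof (cases "n < 2")
        case True then show ?thesis by (cases n) (auto simp: f2_def)
      next
        case False
        then have "f2 n = 2 * n + 1" "2 * n + 1 \<noteq> 3" "\<not> even (2 * n + 1)" "2 * n + 1 \<ge> 2" by (auto simp: f2_def)
        then show ?thesis using False by (simp add: u_def)
      qed
    qed
  qed
  have uC: "\<forall>n. n \<noteq> 0 \<and> n \<noteq> 1 \<longrightarrow> u n \<in> Cs"
  proof (intro allI impI)
    fix n :: nat assume n: "n \<noteq> 0 \<and> n \<noteq> 1"
    show "u n \<in> Cs"
    proof (cases "even n")
      case True
      then show ?thesis using v n by (auto simp: u_def elim!: evenE)
    next
      case False
      then obtain m where m: "n = 2 * m + 1" by (auto elim: oddE)
      show ?thesis using v w n m by (auto simp: u_def)
    qed
  qed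
  have eq: "D \<inter> D' = {(a, b). sat pl lt z (PConj (ren f1 f) (ren f2 g)) (u(0 := a, 1 := b))}"
    using D D' by (auto simp: sat_ren[OF i1] sat_ren[OF i2] c1[simplified] c2[simplified])
  show ?thesis unfolding eq by (rule def2_I[OF uC])
qed

definition sw :: "nat \<Rightarrow> nat" where "sw n = (if n = 0 then 1 else if n = 1 then 0 else n)"

lemma inj_sw: "inj sw" unfolding inj_def sw_def by auto

lemma def2_section: assumes "Es \<in> def2 pl lt z Cs"
  shows "{b. (a, b) \<in> Es} \<in> def1 pl lt z UNIV"
proof -
  obtain f v where D: "Es = {(a, b). sat pl lt z f (v(0 := a, 1 := b))}"
    using assms by (rule def2_E)
  define w where "w = (v \<circ> sw)(1 := a)"
  have c: "\<And>b. (w(0 := b)) \<circ> sw = v(0 := a, 1 := b)"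
    by (auto simp: fun_eq_iff w_def sw_def)
  have eq: "{b. (a, b) \<in> Es} = {b. sat pl lt z (ren sw f) (w(0 := b))}"
    using D by (simp add: sat_ren[OF inj_sw] c)
  show ?thesis unfolding eq by (rule def1_I) simp
qed

lemma def1_cyl1: assumes "D \<in> def1 pl lt z Cs" shows "D \<times> UNIV \<in> def2 pl lt z Cs"
proof -
  obtain f v where v: "\<forall>n. n \<noteq> 0 \<longrightarrow> v n \<in> Cs" and D: "D = {a. sat pl lt z f (v(0 := a))}"
    using assms by (rule def1_E)
  define g where "g n = (if n = 0 then 0 else n + 1)" for n :: nat
  define u where "u k = v (k - 1)" for k
  have ig: "inj g" unfolding inj_def g_def by auto
  have c: "\<And>a b. (u(0 := a, 1 := b)) \<circ> g = v(0 := a)" by (auto simp: fun_eq_iff u_def g_def)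
  have uC: "\<forall>n. n \<noteq> 0 \<and> n \<noteq> 1 \<longrightarrow> u n \<in> Cs" using v by (auto simp: u_def)
  have eq: "D \<times> UNIV = {(a, b). sat pl lt z (ren g f) (u(0 := a, 1 := b))}"
    using D by (auto simp: sat_ren[OF ig] c[simplified])
  show ?thesis unfolding eq by (rule def2_I[OF uC])
qed

lemma def1_cyl2: assumes "D \<in> def1 pl lt z Cs" shows "UNIV \<times> D \<in> def2 pl lt z Cs"
proof -
  obtain f v where v: "\<forall>n. n \<noteq> 0 \<longrightarrow> v n \<in> Cs" and D: "D = {a. sat pl lt z f (v(0 := a))}"
    using assms by (rule def1_E)
  define g where "g n = (if n = 0 then 1 else n + 1)" for n :: nat
  define u where "u k = v (k - 1)" for k
  have ig: "inj g" unfolding inj_def g_def by auto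
  have c: "\<And>a b. (u(0 := a, 1 := b)) \<circ> g = v(0 := b)" by (auto simp: fun_eq_iff u_def g_def)
  have uC: "\<forall>n. n \<noteq> 0 \<and> n \<noteq> 1 \<longrightarrow> u n \<in> Cs" using v by (auto simp: u_def)
  have eq: "UNIV \<times> D = {(a, b). sat pl lt z (ren g f) (u(0 := a, 1 := b))}"
    using D by (auto simp: sat_ren[OF ig] c[simplified])
  show ?thesis unfolding eq by (rule def2_I[OF uC])
qed

lemma def1_UNIV: "c \<in> Cs \<Longrightarrow> UNIV \<in> def1 pl lt z Cs"
  using def1_I[of "\<lambda>_. c" Cs pl lt z PTrue] by simp

lemma def2_UNIV: "c \<in> Cs \<Longrightarrow> UNIV \<in> def2 pl lt z Cs"
  using def2_I[of "\<lambda>_. c" Cs pl lt z PTrue] by simp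

definition ba :: "'a set set \<Rightarrow> bool" where
  "ba B \<longleftrightarrow> UNIV \<in> B \<and> (\<forall>D\<in>B. - D \<in> B) \<and> (\<forall>D\<in>B. \<forall>D'\<in>B. D \<inter> D' \<in> B)"

lemma ba_UNIV: "ba B \<Longrightarrow> UNIV \<in> B" by (simp add: ba_def)
lemma ba_compl: "ba B \<Longrightarrow> D \<in> B \<Longrightarrow> - D \<in> B" by (simp add: ba_def)
lemma ba_int: "ba B \<Longrightarrow> D \<in> B \<Longrightarrow> D' \<in> B \<Longrightarrow> D \<inter> D' \<in> B" by (simp add: ba_def)
lemma ba_empty: "ba B \<Longrightarrow> {} \<in> B"
proof -
  assume b: "ba B"
  have "- UNIV \<in> B" by (rule ba_compl[OF b ba_UNIV[OF b]])
  then show ?thesis by simp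
qed
lemma ba_un: "ba B \<Longrightarrow> D \<in> B \<Longrightarrow> D' \<in> B \<Longrightarrow> D \<union> D' \<in> B"
proof -
  assume "ba B" "D \<in> B" "D' \<in> B"
  then have "- (- D \<inter> - D') \<in> B" by (intro ba_compl ba_int) auto
  then show "D \<union> D' \<in> B" by simp
qed
lemma ba_diff: "ba B \<Longrightarrow> D \<in> B \<Longrightarrow> D' \<in> B \<Longrightarrow> D \<inter> - D' \<in> B"
  by (intro ba_int ba_compl)

lemma ba_Un_fin: assumes "ba B" "finite I" shows "(\<forall>i\<in>I. X i \<in> B) \<Longrightarrow> (\<Union>i\<in>I. X i) \<in> B"
  using assms(2) by (induct I rule: finite_induct) (auto intro: ba_un[OF assms(1)] ba_empty[OF assms(1)])

lemma ba_Int_fin: assumes "ba B" "finite I" shows "(\<forall>i\<in>I. X i \<in> B) \<Longrightarrow> (\<Inter>i\<in>I. X i) \<in> B"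
  using assms(2) by (induct I rule: finite_induct) (auto intro: ba_int[OF assms(1)] ba_UNIV[OF assms(1)])

lemma ba_def1: "c \<in> Cs \<Longrightarrow> ba (def1 pl lt z Cs)"
  unfolding ba_def by (intro conjI ballI def1_UNIV def1_compl def1_int)

lemma ba_def2: "c \<in> Cs \<Longrightarrow> ba (def2 pl lt z Cs)"
  unfolding ba_def by (intro conjI ballI def2_UNIV def2_compl def2_int)

context
  fixes B :: "'a set set" and m :: "'a set \<Rightarrow> real"
  assumes B: "ba B" and m: "keisler B m"
begin

lemma km_nonneg: "D \<in> B \<Longrightarrow> 0 \<le> m D" using m by (simp add: keisler_def)
lemma km_UNIV: "m UNIV = 1" using m by (simp add: keisler_def)
lemma km_add: "D \<in> B \<Longrightarrow> D' \<in> B \<Longrightarrow> D \<inter> D' = {} \<Longrightarrow> m (D \<union> D') = m D + m D'"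
  using m by (simp add: keisler_def)

lemma km_empty: "m {} = 0"
  using km_add[OF ba_empty[OF B] ba_empty[OF B]] by simp

lemma km_split: "D \<in> B \<Longrightarrow> Aa \<in> B \<Longrightarrow> m D = m (D \<inter> Aa) + m (D \<inter> - Aa)"
proof -
  assume "D \<in> B" "Aa \<in> B"
  then have "m ((D \<inter> Aa) \<union> (D \<inter> - Aa)) = m (D \<inter> Aa) + m (D \<inter> - Aa)"
    by (intro km_add ba_int ba_compl B) auto
  moreover have "(D \<inter> Aa) \<union> (D \<inter> - Aa) = D" by auto
  ultimately show ?thesis by simp
qed

lemma km_compl: "D \<in> B \<Longrightarrow> m (- D) = 1 - m D"
  using km_split[OF ba_UNIV[OF B], of D] km_UNIV by simp

lemma km_mono: "D \<in> B \<Longrightarrow> D' \<in> B \<Longrightarrow> D \<subseteq> D' \<Longrightarrow> m D \<le> m D'"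
proof -
  assume a: "D \<in> B" "D' \<in> B" "D \<subseteq> D'"
  have "m D' = m (D' \<inter> D) + m (D' \<inter> - D)" using km_split a by blast
  moreover have "D' \<inter> D = D" using a by auto
  moreover have "m (D' \<inter> - D) \<ge> 0" using a by (intro km_nonneg ba_diff B) auto
  ultimately show ?thesis by simp
qed

lemma km_le1: "D \<in> B \<Longrightarrow> m D \<le> 1"
proof -
  assume "D \<in> B"
  then have "m D \<le> m UNIV" by (rule km_mono[OF _ ba_UNIV[OF B]]) simp
  then show ?thesis using km_UNIV by simp
qed

lemma km_one_int: "Aa \<in> B \<Longrightarrow> Aa' \<in> B \<Longrightarrow> m Aa = 1 \<Longrightarrow> m Aa' = 1 \<Longrightarrow> m (Aa \<inter> Aa') = 1"
proof -
  assume a: "Aa \<in> B" "Aa' \<in> B" "m Aa = 1" "m Aa' = 1"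
  have "m Aa = m (Aa \<inter> Aa') + m (Aa \<inter> - Aa')" using km_split a by blast
  moreover have "m (Aa \<inter> - Aa') \<le> m (- Aa')" using a by (intro km_mono ba_diff ba_compl B) auto
  moreover have "m (- Aa') = 0" using a km_compl by simp
  moreover have "m (Aa \<inter> Aa') \<le> 1" using a by (intro km_le1 ba_int B)
  moreover have "m (Aa \<inter> - Aa') \<ge> 0" using a by (intro km_nonneg ba_diff B)
  ultimately show ?thesis using a by linarith
qed

lemma km_one_eq: "Aa \<in> B \<Longrightarrow> m Aa = 1 \<Longrightarrow> D \<in> B \<Longrightarrow> D' \<in> B \<Longrightarrow> D \<inter> Aa = D' \<inter> Aa \<Longrightarrow> m D = m D'"
proof -
  assume a: "Aa \<in> B" "m Aa = 1" "D \<in> B" "D' \<in> B" "D \<inter> Aa = D' \<inter> Aa"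
  have z: "m (X \<inter> - Aa) = 0" if "X \<in> B" for X
  proof -
    have "m (X \<inter> - Aa) \<le> m (- Aa)" using a that by (intro km_mono ba_diff ba_compl B) auto
    moreover have "m (X \<inter> - Aa) \<ge> 0" using a that by (intro km_nonneg ba_diff B)
    ultimately show ?thesis using a km_compl by simp
  qed
  show ?thesis using km_split[OF a(3) a(1)] km_split[OF a(4) a(1)] z[OF a(3)] z[OF a(4)] a(5) by simp
qed

lemma km_sum: "finite I \<Longrightarrow> (\<forall>i\<in>I. X i \<in> B) \<Longrightarrow> (\<forall>i\<in>I. \<forall>j\<in>I. i \<noteq> j \<longrightarrow> X i \<inter> X j = {}) \<Longrightarrow>
    m (\<Union>i\<in>I. X i) = (\<Sum>i\<in>I. m (X i))"
proof (induct I rule: finite_induct)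
  case empty then show ?case using km_empty by simp
next
  case (insert i I)
  have "m (\<Union>j\<in>insert i I. X j) = m (X i \<union> (\<Union>j\<in>I. X j))" by simp
  also have "\<dots> = m (X i) + m (\<Union>j\<in>I. X j)"
    using insert by (intro km_add ba_Un_fin[OF B insert(1)]) auto
  also have "\<dots> = m (X i) + (\<Sum>j\<in>I. m (X j))" using insert by simp
  finally show ?case using insert by simp
qed

end

context
  fixes B :: "'a set set" and m :: "'a set \<Rightarrow> real"
  assumes B: "ba B" and m: "keisler B m"
begin

lemmas km_nonneg' = km_nonneg[OF B m]
lemmas km_UNIV' = km_UNIV[OF B m]
lemmas km_empty' = km_empty[OF B m]
lemmas km_sum' = km_sum[OF B m]

definition simple :: "('a \<Rightarrow> real) \<Rightarrow> bool" where
  "simple f \<longleftrightarrow> finite (range f) \<and> (\<forall>r. {a. f a = r} \<in> B)"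

definition integ :: "('a \<Rightarrow> real) \<Rightarrow> real" where
  "integ f = (\<Sum>r\<in>range f. r * m {a. f a = r})"

lemma integ_const: "integ (\<lambda>_. c) = c"
  by (simp add: integ_def km_UNIV')

lemma integ_ind: "D \<in> B \<Longrightarrow> integ (\<lambda>a. if a \<in> D then 1 else 0) = m D"
proof -
  assume D: "D \<in> B"
  have r: "range (\<lambda>a. if a \<in> D then 1 else (0::real)) \<subseteq> {0, 1}" by auto
  have "integ (\<lambda>a. if a \<in> D then 1 else 0) = (\<Sum>r\<in>{0,1}. r * m {a. (if a \<in> D then 1 else (0::real)) = r})"
    unfolding integ_def
  proof (rule sum.mono_neutral_left[OF _ r], simp, intro ballI)
    fix r assume "r \<in> {0, 1} - range (\<lambda>a. if a \<in> D then 1 else (0::real))"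
    then have "{a. (if a \<in> D then 1 else (0::real)) = r} = {}" by blast
    then show "r * m {a. (if a \<in> D then 1 else (0::real)) = r} = 0" by (simp add: km_empty')
  qed
  also have "\<dots> = m D" by (simp add: Collect_mem_eq)
  finally show ?thesis .
qed

lemma integ_nonneg: "simple f \<Longrightarrow> (\<forall>a. f a \<ge> 0) \<Longrightarrow> integ f \<ge> 0"
  unfolding integ_def simple_def by (auto intro!: sum_nonneg mult_nonneg_nonneg km_nonneg')

lemma integ_add:
  assumes f: "simple f" and g: "simple g"
  shows "integ (\<lambda>a. f a + g a) = integ f + integ g"
proof -
  define P where "P = range f \<times> range g"
  define cell where "cell p = {a. f a = fst p} \<inter> {a. g a = snd p}" for p
  have finP: "finite P" using f g by (simp add: P_def simple_def)
  have cellB: "\<And>p. cell p \<in> B" using f g by (simp add: cell_def simple_def ba_int[OF B])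
  have disj: "\<And>S. \<forall>i\<in>S. \<forall>j\<in>S. i \<noteq> j \<longrightarrow> cell i \<inter> cell j = {}"
    by (auto simp: cell_def prod_eq_iff)
  have fin_rf: "finite (range f)" and fin_rg: "finite (range g)" using f g by (auto simp: simple_def)
  have If: "integ f = (\<Sum>p\<in>P. fst p * m (cell p))"
  proof -
    have "\<And>s. m {a. f a = s} = (\<Sum>t\<in>range g. m (cell (s, t)))"
    proof -
      fix s
      have "{a. f a = s} = (\<Union>t\<in>range g. cell (s, t))" by (auto simp: cell_def)
      moreover have "m (\<Union>t\<in>range g. cell (s, t)) = (\<Sum>t\<in>range g. m (cell (s, t)))"
        using fin_rg cellB by (intro km_sum') (auto simp: cell_def)
      ultimately show "m {a. f a = s} = (\<Sum>t\<in>range g. m (cell (s, t)))" by simp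
    qed
    then have "integ f = (\<Sum>s\<in>range f. \<Sum>t\<in>range g. s * m (cell (s, t)))"
      unfolding integ_def by (simp add: sum_distrib_left)
    also have "\<dots> = (\<Sum>p\<in>P. fst p * m (cell p))"
      unfolding P_def by (simp add: sum.cartesian_product case_prod_beta)
    finally show ?thesis .
  qed
  have Ig: "integ g = (\<Sum>p\<in>P. snd p * m (cell p))"
  proof -
    have "\<And>t. m {a. g a = t} = (\<Sum>s\<in>range f. m (cell (s, t)))"
    proof -
      fix t
      have "{a. g a = t} = (\<Union>s\<in>range f. cell (s, t))" by (auto simp: cell_def)
      moreover have "m (\<Union>s\<in>range f. cell (s, t)) = (\<Sum>s\<in>range f. m (cell (s, t)))"
        using fin_rf cellB by (intro km_sum') (auto simp: cell_def)
      ultimately show "m {a. g a = t} = (\<Sum>s\<in>range f. m (cell (s, t)))" by simp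
    qed
    then have "integ g = (\<Sum>t\<in>range g. \<Sum>s\<in>range f. t * m (cell (s, t)))"
      unfolding integ_def by (simp add: sum_distrib_left)
    also have "\<dots> = (\<Sum>s\<in>range f. \<Sum>t\<in>range g. t * m (cell (s, t)))"
      by (rule sum.swap)
    also have "\<dots> = (\<Sum>p\<in>P. snd p * m (cell p))"
      unfolding P_def by (simp add: sum.cartesian_product case_prod_beta)
    finally show ?thesis .
  qed
  define h where "h p = fst p + snd p" for p :: "real \<times> real"
  define T where "T = h ` P"
  have finT: "finite T" using finP by (simp add: T_def)
  have rT: "range (\<lambda>a. f a + g a) \<subseteq> T"
  proof
    fix r assume "r \<in> range (\<lambda>a. f a + g a)"
    then obtain a where "r = f a + g a" by blast
    moreover have "(f a, g a) \<in> P" by (simp add: P_def)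
    ultimately show "r \<in> T" unfolding T_def h_def by force
  qed
  have "integ (\<lambda>a. f a + g a) = (\<Sum>r\<in>T. r * m {a. f a + g a = r})"
    unfolding integ_def
  proof (rule sum.mono_neutral_left[OF finT rT], intro ballI)
    fix r assume "r \<in> T - range (\<lambda>a. f a + g a)"
    then have "{a. f a + g a = r} = {}" by auto
    then show "r * m {a. f a + g a = r} = 0" by (simp add: km_empty')
  qed
  also have "\<dots> = (\<Sum>r\<in>T. \<Sum>p\<in>{p\<in>P. h p = r}. h p * m (cell p))"
  proof (rule sum.cong[OF refl])
    fix r assume "r \<in> T"
    have "{a. f a + g a = r} = (\<Union>p\<in>{p\<in>P. h p = r}. cell p)"
    proof
      show "{a. f a + g a = r} \<subseteq> (\<Union>p\<in>{p\<in>P. h p = r}. cell p)"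
      proof
        fix a assume "a \<in> {a. f a + g a = r}"
        then have "(f a, g a) \<in> {p\<in>P. h p = r}" "a \<in> cell (f a, g a)"
          by (auto simp: P_def h_def cell_def)
        then show "a \<in> (\<Union>p\<in>{p\<in>P. h p = r}. cell p)" by blast
      qed
      show "(\<Union>p\<in>{p\<in>P. h p = r}. cell p) \<subseteq> {a. f a + g a = r}"
        by (auto simp: cell_def h_def)
    qed
    moreover have "m (\<Union>p\<in>{p\<in>P. h p = r}. cell p) = (\<Sum>p\<in>{p\<in>P. h p = r}. m (cell p))"
      using finP cellB disj[of "{p\<in>P. h p = r}"] by (intro km_sum') auto
    ultimately have "r * m {a. f a + g a = r} = (\<Sum>p\<in>{p\<in>P. h p = r}. r * m (cell p))"
      by (simp add: sum_distrib_left)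
    also have "\<dots> = (\<Sum>p\<in>{p\<in>P. h p = r}. h p * m (cell p))" by (rule sum.cong) auto
    finally show "r * m {a. f a + g a = r} = (\<Sum>p\<in>{p\<in>P. h p = r}. h p * m (cell p))" .
  qed
  also have "\<dots> = (\<Sum>p\<in>P. h p * m (cell p))"
    by (rule sum.group[OF finP finT]) (simp add: T_def)
  also have "\<dots> = (\<Sum>p\<in>P. fst p * m (cell p)) + (\<Sum>p\<in>P. snd p * m (cell p))"
    by (simp add: h_def distrib_right sum.distrib)
  finally show ?thesis using If Ig by simp
qed

end

lemma RK_def1: assumes "finite K"
  shows "{y. \<exists>k\<in>K. DU pl z e N k y} \<in> def1 pl lt z (range e)"
proof -
  define v where "v n = e (int (n - 2))" for n
  define f where "f = BigDisj (map (\<lambda>k. Dform N 0 1 (k + 2)) (sorted_list_of_set K))"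
  have eq: "{y. \<exists>k\<in>K. DU pl z e N k y} = {a. sat pl lt z f (v(0 := a))}"
    using assms by (auto simp: f_def DU_def v_def)
  show ?thesis unfolding eq by (rule def1_I) (simp add: v_def)
qed

lemma H_def1: "{a. ltd lt d c a} \<in> def1 pl lt z UNIV"
proof -
  have eq: "{a. ltd lt d c a} = {a. sat pl lt z (PLtd d 1 0) ((\<lambda>_. c)(0 := a))}" by simp
  show ?thesis unfolding eq by (rule def1_I) simp
qed

lemma G_def2: "{(a, b). ltd lt d a b} \<in> def2 pl lt z (range (e :: int \<Rightarrow> 'u))"
proof -
  have eq: "{(a, b). ltd lt d a b} = {(a, b). sat pl lt z (PLtd d 0 1) ((\<lambda>_. e 0)(0 := a, 1 := b))}" by simp
  show ?thesis unfolding eq by (rule def2_I) simp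
qed

lemma S_def1:
  assumes "\<forall>a y. (a, y) \<in> Es \<longleftrightarrow> sat pl lt z f (v(0 := a, 1 := y))"
  shows "{a. \<exists>zz. \<forall>y. ltd lt d zz y \<and> DU pl z e N k y \<longrightarrow> (a, y) \<in> Es} \<in> def1 pl lt z UNIV"
proof -
  define M where "M = vb f + 2"
  define th where "th = PEx M (PAll 1 (PImp (PConj (PLtd d M 1) (Dform N 1 (M + 1) (M + 2))) f))"
  define u where "u = v(M + 2 := e (int k))"
  have loc: "\<And>a zz y. sat pl lt z f (u(0 := a, M := zz, 1 := y)) = sat pl lt z f (v(0 := a, 1 := y))"
    by (rule sat_local) (auto simp: u_def M_def)
  have neq: "M \<noteq> 0" "M \<noteq> 1" "M + 2 \<noteq> 0" "M + 2 \<noteq> 1" "M + 2 \<noteq> M" "M + 1 \<noteq> 1" "M + 1 \<noteq> M + 2"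
    by (auto simp: M_def)
  have eq: "{a. \<exists>zz. \<forall>y. ltd lt d zz y \<and> DU pl z e N k y \<longrightarrow> (a, y) \<in> Es} = {a. sat pl lt z th (u(0 := a))}"
  proof -
    have uM: "u (M + 2) = e (int k)" by (simp add: u_def)
    show ?thesis unfolding th_def using neq uM by (simp add: loc[simplified] assms[simplified] DU_def)
  qed
  show ?thesis unfolding eq by (rule def1_I) simp
qed

lemma fE_simple:
  assumes em: "elem_emb pl lt z e" and nu: "keisler (def1 pl lt z UNIV) \<nu>"
    and nu1: "\<forall>b. \<nu> {a. ltd lt d b a} = 1" and Es: "Es \<in> def2 pl lt z UNIV"
  shows "simple (def1 pl lt z UNIV) (\<lambda>a. \<nu> {b. (a, b) \<in> Es})"
proof -
  let ?B = "def1 pl lt z UNIV"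
  have B: "ba ?B" by (rule ba_def1[of z]) simp
  obtain f v where Esd: "Es = {(a, b). sat pl lt z f (v(0 := a, 1 := b))}" using Es by (rule def2_E)
  have mem: "\<forall>a y. (a, y) \<in> Es \<longleftrightarrow> sat pl lt z f (v(0 := a, 1 := y))" using Esd by auto
  define psi where "psi = ren sw f"
  define w where "w = v \<circ> sw"
  have memp: "\<And>a y. (a, y) \<in> Es \<longleftrightarrow> sat pl lt z psi ((w(1 := a))(0 := y))"
  proof -
    fix a y
    have "(w(1 := a, 0 := y)) \<circ> sw = v(0 := a, 1 := y)" by (auto simp: fun_eq_iff w_def sw_def)
    then show "(a, y) \<in> Es \<longleftrightarrow> sat pl lt z psi ((w(1 := a))(0 := y))"
      using mem by (simp add: psi_def sat_ren[OF inj_sw])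
  qed
  obtain N where N: "N > 0" and per: "\<forall>u. \<exists>zz. \<forall>k<N.
     (\<forall>y. ltd lt d zz y \<and> DU pl z e N k y \<longrightarrow> sat pl lt z psi (u(0 := y))) \<or>
     (\<forall>y. ltd lt d zz y \<and> DU pl z e N k y \<longrightarrow> \<not> sat pl lt z psi (u(0 := y)))"
    using U_per[OF em, of d psi] by blast
  define Ak where "Ak a k = (\<exists>zz. \<forall>y. ltd lt d zz y \<and> DU pl z e N k y \<longrightarrow> (a, y) \<in> Es)" for a k
  define Ka where "Ka a = {k. k < N \<and> Ak a k}" for a
  define RK where "RK K = {y. \<exists>k\<in>K. DU pl z e N k y}" for K
  define g where "g K = \<nu> (RK K)" for K
  have RKB: "\<And>K. K \<subseteq> {..<N} \<Longrightarrow> RK K \<in> ?B"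
  proof -
    fix K :: "nat set" assume "K \<subseteq> {..<N}"
    then have "finite K" using finite_subset by blast
    then have "RK K \<in> def1 pl lt z (range e)" unfolding RK_def by (rule RK_def1)
    then show "RK K \<in> ?B" by (rule def1_mono[rotated]) simp
  qed
  have sec: "\<And>a. {b. (a, b) \<in> Es} \<in> ?B" by (rule def2_section[OF Es])
  have KaN: "\<And>a. Ka a \<subseteq> {..<N}" by (auto simp: Ka_def)
  have key: "\<And>a. \<nu> {b. (a, b) \<in> Es} = g (Ka a)"
  proof -
    fix a
    obtain zz where zz: "\<forall>k<N.
     (\<forall>y. ltd lt d zz y \<and> DU pl z e N k y \<longrightarrow> sat pl lt z psi ((w(1 := a))(0 := y))) \<or>
     (\<forall>y. ltd lt d zz y \<and> DU pl z e N k y \<longrightarrow> \<not> sat pl lt z psi ((w(1 := a))(0 := y)))"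
      using per by blast
    then have zz': "\<forall>k<N. (\<forall>y. ltd lt d zz y \<and> DU pl z e N k y \<longrightarrow> (a, y) \<in> Es) \<or>
        (\<forall>y. ltd lt d zz y \<and> DU pl z e N k y \<longrightarrow> (a, y) \<notin> Es)"
      using memp by simp
    define H where "H = {y. ltd lt d zz y}"
    have HB: "H \<in> ?B" using H_def1 H_def by simp
    have H1: "\<nu> H = 1" using nu1 H_def by simp
    have "{b. (a, b) \<in> Es} \<inter> H = RK (Ka a) \<inter> H"
    proof (intro set_eqI iffI)
      fix y assume "y \<in> {b. (a, b) \<in> Es} \<inter> H"
      then have y: "(a, y) \<in> Es" "ltd lt d zz y" by (auto simp: H_def)
      obtain k where k: "k < N" "DU pl z e N k y" using U_cover[OF em N] by blast
      have "\<forall>y. ltd lt d zz y \<and> DU pl z e N k y \<longrightarrow> (a, y) \<in> Es" using zz' k y by blast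
      then have "Ak a k" unfolding Ak_def by blast
      then show "y \<in> RK (Ka a) \<inter> H" using k y by (auto simp: RK_def Ka_def H_def)
    next
      fix y assume "y \<in> RK (Ka a) \<inter> H"
      then obtain k where k: "k < N" "Ak a k" "DU pl z e N k y" and y: "ltd lt d zz y"
        by (auto simp: RK_def Ka_def H_def)
      obtain zz2 where z2: "\<forall>y. ltd lt d zz2 y \<and> DU pl z e N k y \<longrightarrow> (a, y) \<in> Es"
        using k(2) Ak_def by blast
      have "\<forall>y. ltd lt d zz y \<and> DU pl z e N k y \<longrightarrow> (a, y) \<in> Es"
      proof (rule ccontr)
        assume "\<not> (\<forall>y. ltd lt d zz y \<and> DU pl z e N k y \<longrightarrow> (a, y) \<in> Es)"
        then have none: "\<forall>y. ltd lt d zz y \<and> DU pl z e N k y \<longrightarrow> (a, y) \<notin> Es" using zz' k(1) by blast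
        obtain y' where "ltd lt d zz y'" "ltd lt d zz2 y'" "DU pl z e N k y'"
          using U_unb[OF em N k(1)] by blast
        then show False using none z2 by blast
      qed
      then show "y \<in> {b. (a, b) \<in> Es} \<inter> H" using k y by (auto simp: H_def)
    qed
    then show "\<nu> {b. (a, b) \<in> Es} = g (Ka a)" unfolding g_def
      by (rule km_one_eq[OF B nu HB H1 sec RKB[OF KaN]])
  qed
  have rng: "range (\<lambda>a. \<nu> {b. (a, b) \<in> Es}) \<subseteq> g ` Pow {..<N}" using key KaN by auto
  have fin: "finite (range (\<lambda>a. \<nu> {b. (a, b) \<in> Es}))" using rng by (rule finite_subset) simp
  have lvl: "\<And>r. {a. \<nu> {b. (a, b) \<in> Es} = r} \<in> ?B"
  proof -
    fix r
    define S where "S k = {a. Ak a k}" for k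
    have SB: "\<And>k. S k \<in> ?B" unfolding S_def Ak_def by (rule S_def1[OF mem])
    define Q where "Q = {K \<in> Pow {..<N}. g K = r}"
    define X where "X K = (\<Inter>k\<in>{..<N}. (if k \<in> K then S k else - S k))" for K
    have "{a. \<nu> {b. (a, b) \<in> Es} = r} = (\<Union>K\<in>Q. X K)"
    proof (intro set_eqI iffI)
      fix a assume "a \<in> {a. \<nu> {b. (a, b) \<in> Es} = r}"
      then have "Ka a \<in> Q" using key KaN by (auto simp: Q_def)
      moreover have "a \<in> X (Ka a)" by (auto simp: X_def Ka_def S_def)
      ultimately show "a \<in> (\<Union>K\<in>Q. X K)" by blast
    next
      fix a assume "a \<in> (\<Union>K\<in>Q. X K)"
      then obtain K where K: "K \<in> Q" "a \<in> X K" by blast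
      have "Ka a = K"
      proof (intro set_eqI iffI)
        fix k assume "k \<in> Ka a"
        then have kk: "k < N" "a \<in> S k" by (auto simp: Ka_def S_def)
        show "k \<in> K"
        proof (rule ccontr)
          assume "k \<notin> K"
          then have "a \<in> - S k" using K(2) kk(1) by (auto simp: X_def)
          then show False using kk by blast
        qed
      next
        fix k assume kK: "k \<in> K"
        then have kN: "k < N" using K(1) by (auto simp: Q_def)
        then have "a \<in> S k" using K(2) kK by (auto simp: X_def)
        then show "k \<in> Ka a" using kN by (auto simp: Ka_def S_def)
      qed
      then show "a \<in> {a. \<nu> {b. (a, b) \<in> Es} = r}" using key K(1) by (auto simp: Q_def)
    qed
    moreover have "(\<Union>K\<in>Q. X K) \<in> ?B"
    proof (rule ba_Un_fin[OF B])
      show "finite Q" by (simp add: Q_def)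
      show "\<forall>K\<in>Q. X K \<in> ?B"
      proof
        fix K assume "K \<in> Q"
        show "X K \<in> ?B" unfolding X_def
          by (rule ba_Int_fin[OF B]) (auto intro: SB ba_compl[OF B])
      qed
    qed
    ultimately show "{a. \<nu> {b. (a, b) \<in> Es} = r} \<in> ?B" by simp
  qed
  show ?thesis unfolding simple_def[OF B nu] using fin lvl by blast
qed


lemma main_dir:
  fixes pl :: "'u \<Rightarrow> 'u \<Rightarrow> 'u" and lt :: "'u \<Rightarrow> 'u \<Rightarrow> bool" and z :: 'u
    and e :: "int \<Rightarrow> 'u" and \<mu> \<nu> :: "'u set \<Rightarrow> real"
  assumes em: "elem_emb pl lt z e" and mu: "keisler (def1 pl lt z UNIV) \<mu>"
    and nu: "keisler (def1 pl lt z UNIV) \<nu>"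
    and h: "\<forall>b. \<mu> {a. ltd lt d b a} = 1 \<and> \<nu> {a. ltd lt d b a} = 1"
  shows "geEZ pl lt z (range e) \<mu> \<nu>"
proof -
  let ?B1 = "def1 pl lt z UNIV"
  let ?B2 = "def2 pl lt z UNIV"
  let ?BZ = "def2 pl lt z (range e)"
  have B1: "ba ?B1" by (rule ba_def1[of z]) simp
  have B2: "ba ?B2" by (rule ba_def2[of z]) simp
  have nu1: "\<forall>b. \<nu> {a. ltd lt d b a} = 1" and mu1: "\<forall>b. \<mu> {a. ltd lt d b a} = 1" using h by auto
  define fE where "fE Es = (\<lambda>a. \<nu> {b. (a, b) \<in> Es})" for Es :: "('u \<times> 'u) set"
  define lam where "lam Es = integ \<mu> (fE Es)" for Es
  have BZ2: "\<And>Es. Es \<in> ?BZ \<Longrightarrow> Es \<in> ?B2" by (erule def2_mono[rotated]) simp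
  have simp_f: "\<And>Es. Es \<in> ?B2 \<Longrightarrow> simple ?B1 (fE Es)" unfolding fE_def by (rule fE_simple[OF em nu nu1])
  have fnn: "\<And>Es a. Es \<in> ?B2 \<Longrightarrow> fE Es a \<ge> 0" unfolding fE_def by (rule km_nonneg[OF B1 nu def2_section])
  have lamZ: "keisler ?BZ lam"
    unfolding keisler_def
  proof (intro conjI ballI impI)
    fix D assume "D \<in> ?BZ"
    then show "0 \<le> lam D" unfolding lam_def using integ_nonneg[OF B1 mu simp_f[OF BZ2]] fnn BZ2 by blast
  next
    have "fE UNIV = (\<lambda>_. 1)" unfolding fE_def using km_UNIV[OF B1 nu] by simp
    then show "lam UNIV = 1" unfolding lam_def using integ_const[OF B1 mu] by simp
  next
    fix D D2 assume D: "D \<in> ?BZ" and D2: "D2 \<in> ?BZ" and dj: "D \<inter> D2 = {}"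
    have "fE (D \<union> D2) = (\<lambda>a. fE D a + fE D2 a)"
    proof
      fix a
      have "{b. (a, b) \<in> D \<union> D2} = {b. (a, b) \<in> D} \<union> {b. (a, b) \<in> D2}" by auto
      moreover have "{b. (a, b) \<in> D} \<inter> {b. (a, b) \<in> D2} = {}" using dj by auto
      ultimately show "fE (D \<union> D2) a = fE D a + fE D2 a" unfolding fE_def
        using km_add[OF B1 nu def2_section[OF D] def2_section[OF D2]] by simp
    qed
    then show "lam (D \<union> D2) = lam D + lam D2" unfolding lam_def
      using integ_add[OF B1 mu simp_f[OF BZ2[OF D]] simp_f[OF BZ2[OF D2]]] by simp
  qed
  have marg: "\<forall>D \<in> def1 pl lt z (range e). lam (D \<times> UNIV) = \<mu> D"
  proof
    fix D assume D: "D \<in> def1 pl lt z (range e)"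
    then have D1: "D \<in> ?B1" by (rule def1_mono[rotated]) simp
    have "fE (D \<times> UNIV) = (\<lambda>a. if a \<in> D then 1 else 0)"
      unfolding fE_def using km_UNIV[OF B1 nu] km_empty[OF B1 nu] by (auto simp: fun_eq_iff)
    then show "lam (D \<times> UNIV) = \<mu> D" unfolding lam_def using integ_ind[OF B1 mu D1] by simp
  qed
  have omega: "\<forall>\<omega>. keisler ?B2 \<omega> \<longrightarrow> (\<forall>Es\<in>?BZ. \<omega> Es = lam Es) \<longrightarrow>
      (\<forall>D\<in>?B1. \<omega> (D \<times> UNIV) = \<mu> D) \<longrightarrow> (\<forall>D\<in>?B1. \<omega> (UNIV \<times> D) = \<nu> D)"
  proof (intro allI impI ballI)
    fix \<omega> D assume om: "keisler ?B2 \<omega>" and agr: "\<forall>Es\<in>?BZ. \<omega> Es = lam Es"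
      and omx: "\<forall>D\<in>?B1. \<omega> (D \<times> UNIV) = \<mu> D" and D: "D \<in> ?B1"
    define G where "G = {(a, b). ltd lt d a b}"
    have GZ: "G \<in> ?BZ" unfolding G_def by (rule G_def2)
    have "fE G = (\<lambda>_. 1)" unfolding fE_def G_def using nu1 by simp
    then have "lam G = 1" unfolding lam_def using integ_const[OF B1 mu] by simp
    then have omG: "\<omega> G = 1" using agr GZ by simp
    have Hy: "\<And>c. \<omega> (UNIV \<times> {a. ltd lt d c a}) = 1"
    proof -
      fix c
      define Hc where "Hc = {a. ltd lt d c a}"
      have Hc1: "Hc \<in> ?B1" unfolding Hc_def by (rule H_def1)
      have a1: "\<omega> (Hc \<times> UNIV) = 1" using omx Hc1 mu1 Hc_def by simp
      have I1: "\<omega> (G \<inter> (Hc \<times> UNIV)) = 1"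
        by (rule km_one_int[OF B2 om BZ2[OF GZ] def1_cyl1[OF Hc1] omG a1])
      have sub: "G \<inter> (Hc \<times> UNIV) \<subseteq> UNIV \<times> Hc" using ltd_trans[OF em] by (auto simp: G_def Hc_def)
      have GH: "G \<inter> (Hc \<times> UNIV) \<in> ?B2" by (intro ba_int[OF B2] BZ2[OF GZ] def1_cyl1[OF Hc1])
      have "\<omega> (G \<inter> (Hc \<times> UNIV)) \<le> \<omega> (UNIV \<times> Hc)"
        by (rule km_mono[OF B2 om GH def1_cyl2[OF Hc1] sub])
      moreover have "\<omega> (UNIV \<times> Hc) \<le> 1" by (rule km_le1[OF B2 om def1_cyl2[OF Hc1]])
      ultimately show "\<omega> (UNIV \<times> {a. ltd lt d c a}) = 1" using I1 Hc_def by simp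
    qed
    obtain f v where Dd: "D = {a. sat pl lt z f (v(0 := a))}" using D by (rule def1_E)
    obtain N where N: "N > 0" and per: "\<forall>u. \<exists>zz. \<forall>k<N.
       (\<forall>y. ltd lt d zz y \<and> DU pl z e N k y \<longrightarrow> sat pl lt z f (u(0 := y))) \<or>
       (\<forall>y. ltd lt d zz y \<and> DU pl z e N k y \<longrightarrow> \<not> sat pl lt z f (u(0 := y)))"
      using U_per[OF em, of d f] by blast
    obtain zz where zz: "\<forall>k<N.
       (\<forall>y. ltd lt d zz y \<and> DU pl z e N k y \<longrightarrow> sat pl lt z f (v(0 := y))) \<or>
       (\<forall>y. ltd lt d zz y \<and> DU pl z e N k y \<longrightarrow> \<not> sat pl lt z f (v(0 := y)))"
      using per by blast
    define K where "K = {k. k < N \<and> (\<forall>y. ltd lt d zz y \<and> DU pl z e N k y \<longrightarrow> sat pl lt z f (v(0 := y)))}"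
    define D' where "D' = {y. \<exists>k\<in>K. DU pl z e N k y}"
    have D'Z: "D' \<in> def1 pl lt z (range e)" unfolding D'_def by (rule RK_def1) (simp add: K_def)
    have D'1: "D' \<in> ?B1" using D'Z by (rule def1_mono[rotated]) simp
    define H where "H = {y. ltd lt d zz y}"
    have HB: "H \<in> ?B1" unfolding H_def by (rule H_def1)
    have eqH: "D \<inter> H = D' \<inter> H"
    proof (intro set_eqI iffI)
      fix y assume "y \<in> D \<inter> H"
      then have y: "sat pl lt z f (v(0 := y))" "ltd lt d zz y" by (auto simp: Dd H_def)
      obtain k where k: "k < N" "DU pl z e N k y" using U_cover[OF em N] by blast
      have "\<forall>y. ltd lt d zz y \<and> DU pl z e N k y \<longrightarrow> sat pl lt z f (v(0 := y))" using zz k y by blast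
      then show "y \<in> D' \<inter> H" using k y by (auto simp: D'_def K_def H_def)
    next
      fix y assume "y \<in> D' \<inter> H"
      then obtain k where "k \<in> K" "DU pl z e N k y" "ltd lt d zz y" by (auto simp: D'_def H_def)
      then show "y \<in> D \<inter> H" by (auto simp: K_def Dd H_def)
    qed
    have H1: "\<nu> H = 1" using nu1 H_def by simp
    have nuD: "\<nu> D = \<nu> D'" by (rule km_one_eq[OF B1 nu HB H1 D D'1 eqH])
    have H2: "UNIV \<times> H \<in> ?B2" by (rule def1_cyl2[OF HB])
    have H21: "\<omega> (UNIV \<times> H) = 1" using Hy H_def by simp
    have eqH2: "(UNIV \<times> D) \<inter> (UNIV \<times> H) = (UNIV \<times> D') \<inter> (UNIV \<times> H)"
    proof -
      have "(UNIV \<times> D) \<inter> (UNIV \<times> H) = UNIV \<times> (D \<inter> H)" by auto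
      also have "\<dots> = UNIV \<times> (D' \<inter> H)" using eqH by simp
      also have "\<dots> = (UNIV \<times> D') \<inter> (UNIV \<times> H)" by auto
      finally show ?thesis .
    qed
    have omD: "\<omega> (UNIV \<times> D) = \<omega> (UNIV \<times> D')"
      by (rule km_one_eq[OF B2 om H2 H21 def1_cyl2[OF D] def1_cyl2[OF D'1] eqH2])
    have "UNIV \<times> D' \<in> ?BZ" by (rule def1_cyl2[OF D'Z])
    then have om2: "\<omega> (UNIV \<times> D') = lam (UNIV \<times> D')" using agr by simp
    have "fE (UNIV \<times> D') = (\<lambda>_. \<nu> D')" unfolding fE_def by simp
    then have "lam (UNIV \<times> D') = \<nu> D'" unfolding lam_def using integ_const[OF B1 mu] by simp
    then show "\<omega> (UNIV \<times> D) = \<nu> D" using omD om2 nuD by simp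
  qed
  show ?thesis unfolding geEZ_def using lamZ marg omega by blast
qed

theorem proposition6p3:
  fixes pl :: "'u \<Rightarrow> 'u \<Rightarrow> 'u" and lt :: "'u \<Rightarrow> 'u \<Rightarrow> bool" and z :: 'u
    and e :: "int \<Rightarrow> 'u" and \<mu> \<nu> :: "'u set \<Rightarrow> real"
  assumes "elem_emb pl lt z e"
    and "saturated pl lt z"
    and "keisler (def1 pl lt z UNIV) \<mu>"
    and "keisler (def1 pl lt z UNIV) \<nu>"
  shows "((\<forall>b. \<mu> {a. lt b a} = 1 \<and> \<nu> {a. lt b a} = 1) \<longrightarrow> geEZ pl lt z (range e) \<mu> \<nu>)
       \<and> ((\<forall>b. \<mu> {a. lt a b} = 1 \<and> \<nu> {a. lt a b} = 1) \<longrightarrow> geEZ pl lt z (range e) \<mu> \<nu>)"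
proof (intro conjI impI)
  assume "\<forall>b. \<mu> {a. lt b a} = 1 \<and> \<nu> {a. lt b a} = 1"
  then have "\<forall>b. \<mu> {a. ltd lt True b a} = 1 \<and> \<nu> {a. ltd lt True b a} = 1" by (simp add: ltd_def)
  then show "geEZ pl lt z (range e) \<mu> \<nu>" by (rule main_dir[OF assms(1) assms(3) assms(4)])
next
  assume "\<forall>b. \<mu> {a. lt a b} = 1 \<and> \<nu> {a. lt a b} = 1"
  then have "\<forall>b. \<mu> {a. ltd lt False b a} = 1 \<and> \<nu> {a. ltd lt False b a} = 1" by (simp add: ltd_def)
  then show "geEZ pl lt z (range e) \<mu> \<nu>" by (rule main_dir[OF assms(1) assms(3) assms(4)])
qed

end
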